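(* Let $f$, $\bar f$ and the systems $(\Sigma_\alpha)$: $\dot x=f(x,t,\alpha t)$, $(\Sigma^u_\alpha)$: $\dot x=f(x,t,\alpha t)+u$ ($x,u\in\mathbb{R}^n$), and $(\bar\Sigma)$: $\dot x=\bar f(x,t)$ be as below. Assume there exist $\delta\in\mathcal{K}$ such that $(\bar\Sigma)$ is UGAS and $\delta$-compatible, constants $\eta_o>0$, $K>1$ and $N\in\mathcal{M}$ such that $$\left|\int_{r-1/\eta}^{r+1/\eta}\{f(x,l,\eta^2 l)-\bar f(x,l)\}\,\mathrm{d}l\right|\le\delta(|x|/2)N(\eta)\quad\forall\eta\ge\eta_o,\ x\in\mathbb{R}^n,\ r\in\mathbb{R},$$ and $|\partial\bar f/\partial x(x,t)|\le K$, $|\partial f/\partial x(x,t,\alpha t)|\le K$, $|f(x,t,\alpha t)|\le\delta(|x|/2)$ for all $t\in\mathbb{R}$, $x\in\mathbb{R}^n$, $\alpha>0$. Let $V$ be a $C^1$ Lyapunov function for $(\bar\Sigma)$ which, together with some constants $\bar c\in(0,1)$, $\bar{\bar c}>0$, satisfies (P1)–(P3) of the definition of $\delta$-compatibility. Then there exists a constant $\underline\alpha>0$ such that for all constants $\alpha>\underline\alpha$, $$V^{[\alpha]}(\xi,t):=V\!\left(\xi-\frac{\sqrt\alpha}{2}\int_{t-2/\sqrt\alpha}^{t}\int_s^t\{f(\xi,l,\alpha l)-\bar f(\xi,l)\}\,\mathrm{d}l\,\mathrm{d}s,\ t\right)$$ is a Lyapunov function for $(\Sigma_\alpha)$ and an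 iISS Lyapunov function for $(\Sigma^u_\alpha)$. If also $\delta\in\mathcal{K}_\infty$, then $V^{[\alpha]}$ is also an ISS Lyapunov function for $(\Sigma^u_\alpha)$ for all constants $\alpha>\underline\alpha$.
   Context: Standing assumptions: $f:\mathbb{R}^n\times\mathbb{R}\times\mathbb{R}\to\mathbb{R}^n$ is continuous in time, $C^1$ in $x$, $f(0,t,\alpha t)=\bar f(0,t)=0$ for all $t$, $\alpha>0$; $\bar f$ is continuous and $C^1$ in $x$; all systems are forward complete; there is $\rho\in\mathcal{K}_\infty$ with $|f(x,t,\alpha t)|\le\rho(|x|)$. Function classes: positive definite (continuous $[0,\infty)\to[0,\infty)$, zero only at $0$); $\mathcal{K}$ (positive definite, strictly increasing); $\mathcal{K}_\infty$ ($\mathcal{K}$ and unbounded); $\mathcal{KL}$ as usual; $N\in\mathcal{M}$ iff $\lim_{\eta\to\infty}\eta N(\eta)=0$. A system $\dot x=F(x,t)$ is UGAS if there is $\beta\in\mathcal{KL}$ with $|\phi(t;t_o,x_o)|\le\beta(|x_o|,t-t_o)$ for all $t\ge t_o\ge0$. A Lyapunov function for $\dot x=F(x,t)$ is a $C^1$ function $V:\mathbb{R}^n\times[0,\infty)\to[0,\infty)$ with $\delta_1,\delta_2\in\mathcal{K}_\infty$, $\delta_3\in\mathcal{K}$ such that $\delta_1(|\xi|)\le V(\xi,t)\le\delta_2(|\xi|)$ and $V_t+V_\xi F(\xi,t)\le-\delta_3(|\xi|)$ for all $\xi$, $t\ge0$ (subscripts denote partial gradients). $\delta$-compatibility of $\dot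 x=\bar f(x,t)$ (for $\delta\in\mathcal{K}$): there are a $C^1$ Lyapunov function $V$ and constants $\bar c\in(0,1)$, $\bar{\bar c}>0$ with, for all $\xi,t$: (P1) $V_t+V_\xi\bar f(\xi,t)\le-\bar c\,\delta^2(|\xi|)$; (P2) $|V_\xi(\xi,t)|\le\delta(|\xi|)$ and $|\bar f(\xi,t)|\le\delta(|\xi|/2)$; (P3) $\delta(s)\le\bar{\bar c}s$ for $s\ge0$. A function $V:\mathbb{R}^n\times[0,\infty)\to[0,\infty)$ is uniformly proper and positive definite if there are $\delta_1,\delta_2\in\mathcal{K}_\infty$ with $\delta_1(|\xi|)\le V(\xi,t)\le\delta_2(|\xi|)$. For a control system $\dot x=F(x,t,u)$, a $C^1$ uniformly proper and positive definite $V$ is an ISS Lyapunov function if there are $\chi,\delta_3\in\mathcal{K}_\infty$ such that for all $t\ge0$, $\xi$, $u$: $|u|\le\chi(|\xi|)\Rightarrow V_t(\xi,t)+V_\xi(\xi,t)F(\xi,t,u)\le-\delta_3(|\xi|)$; it is an iISS Lyapunov function if there are $\Delta\in\mathcal{K}_\infty$ and a positive definite $\nu$ with $V_t(\xi,t)+V_\xi(\xi,t)F(\xi,t,u)\le-\nu(|\xi|)+\Delta(|u|)$ for all $t\ge0,\xi,u$. *)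

theory Defs
  imports "HOL-Analysis.Analysis"
begin

definition pos_def_fun :: "(real \<Rightarrow> real) \<Rightarrow> bool" where
  "pos_def_fun a \<longleftrightarrow> continuous_on {0..} a \<and> a 0 = 0 \<and> (\<forall>s>0. a s > 0)"

definition classK :: "(real \<Rightarrow> real) \<Rightarrow> bool" where
  "classK a \<longleftrightarrow> pos_def_fun a \<and> strict_mono_on {0..} a"

definition classKinf :: "(real \<Rightarrow> real) \<Rightarrow> bool" where
  "classKinf a \<longleftrightarrow> classK a \<and> (\<forall>M. \<exists>s\<ge>0. M < a s)"

definition classKL :: "(real \<Rightarrow> real \<Rightarrow> real) \<Rightarrow> bool" where
  "classKL b \<longleftrightarrow> continuous_on ({0..} \<times> {0..}) (\<lambda>p. b (fst p) (snd p))
     \<and> (\<forall>s\<ge>0. classK (\<lambda>r. b r s))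
     \<and> (\<forall>r\<ge>0. antimono_on {0..} (\<lambda>s. b r s) \<and> ((\<lambda>s. b r s) \<longlongrightarrow> 0) at_top)"

definition classM :: "(real \<Rightarrow> real) \<Rightarrow> bool" where
  "classM N \<longleftrightarrow> ((\<lambda>\<eta>. \<eta> * N \<eta>) \<longlongrightarrow> 0) at_top"

definition is_solution :: "('a::real_normed_vector \<Rightarrow> real \<Rightarrow> 'a) \<Rightarrow> real \<Rightarrow> 'a \<Rightarrow> (real \<Rightarrow> 'a) \<Rightarrow> bool" where
  "is_solution F t0 x0 \<phi> \<longleftrightarrow> \<phi> t0 = x0 \<and>
     (\<forall>t\<ge>t0. (\<phi> has_vector_derivative F (\<phi> t) t) (at t within {t0..}))"

definition forward_complete :: "('a::real_normed_vector \<Rightarrow> real \<Rightarrow> 'a) \<Rightarrow> bool" where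
  "forward_complete F \<longleftrightarrow> (\<forall>t0\<ge>0. \<forall>x0. \<exists>\<phi>. is_solution F t0 x0 \<phi>)"

definition UGAS :: "('a::real_normed_vector \<Rightarrow> real \<Rightarrow> 'a) \<Rightarrow> bool" where
  "UGAS F \<longleftrightarrow> (\<exists>\<beta>. classKL \<beta> \<and>
     (\<forall>t0 x0 \<phi> t. t0 \<ge> 0 \<longrightarrow> is_solution F t0 x0 \<phi> \<longrightarrow> t \<ge> t0 \<longrightarrow>
        norm (\<phi> t) \<le> \<beta> (norm x0) (t - t0)))"

definition C1_tv :: "('a::euclidean_space \<Rightarrow> real \<Rightarrow> real) \<Rightarrow> ('a \<Rightarrow> real \<Rightarrow> 'a) \<Rightarrow> ('a \<Rightarrow> real \<Rightarrow> real) \<Rightarrow> bool" where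
  "C1_tv W Wx Wt \<longleftrightarrow>
     (\<forall>\<xi> t. t \<ge> 0 \<longrightarrow>
        ((\<lambda>p. W (fst p) (snd p)) has_derivative (\<lambda>h. Wx \<xi> t \<bullet> fst h + Wt \<xi> t * snd h))
          (at (\<xi>, t) within (UNIV \<times> {0..})))
     \<and> continuous_on (UNIV \<times> {0..}) (\<lambda>p. Wx (fst p) (snd p))
     \<and> continuous_on (UNIV \<times> {0..}) (\<lambda>p. Wt (fst p) (snd p))"

definition unif_proper_pd :: "('a::real_normed_vector \<Rightarrow> real \<Rightarrow> real) \<Rightarrow> bool" where
  "unif_proper_pd W \<longleftrightarrow> (\<exists>d1 d2. classKinf d1 \<and> classKinf d2 \<and>
     (\<forall>\<xi> t. t \<ge> 0 \<longrightarrow> d1 (norm \<xi>) \<le> W \<xi> t \<and> W \<xi> t \<le> d2 (norm \<xi>)))"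

definition lyap_with :: "('a::euclidean_space \<Rightarrow> real \<Rightarrow> 'a) \<Rightarrow> ('a \<Rightarrow> real \<Rightarrow> real)
    \<Rightarrow> ('a \<Rightarrow> real \<Rightarrow> 'a) \<Rightarrow> ('a \<Rightarrow> real \<Rightarrow> real) \<Rightarrow> bool" where
  "lyap_with F W Wx Wt \<longleftrightarrow> C1_tv W Wx Wt \<and>
     (\<exists>d1 d2 d3. classKinf d1 \<and> classKinf d2 \<and> classK d3 \<and>
       (\<forall>\<xi> t. t \<ge> 0 \<longrightarrow> d1 (norm \<xi>) \<le> W \<xi> t \<and> W \<xi> t \<le> d2 (norm \<xi>)
          \<and> Wt \<xi> t + Wx \<xi> t \<bullet> F \<xi> t \<le> - d3 (norm \<xi>)))"

definition lyapunov_fun :: "('a::euclidean_space \<Rightarrow> real \<Rightarrow> 'a) \<Rightarrow> ('a \<Rightarrow> real \<Rightarrow> real) \<Rightarrow> bool" where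
  "lyapunov_fun F W \<longleftrightarrow> (\<exists>Wx Wt. lyap_with F W Wx Wt)"

definition ISS_lyapunov_fun :: "('a::euclidean_space \<Rightarrow> real \<Rightarrow> 'a \<Rightarrow> 'a) \<Rightarrow> ('a \<Rightarrow> real \<Rightarrow> real) \<Rightarrow> bool" where
  "ISS_lyapunov_fun F W \<longleftrightarrow> (\<exists>Wx Wt chi d3. C1_tv W Wx Wt \<and> unif_proper_pd W \<and>
     classKinf chi \<and> classKinf d3 \<and>
     (\<forall>t \<xi> u. t \<ge> 0 \<longrightarrow> norm u \<le> chi (norm \<xi>) \<longrightarrow>
        Wt \<xi> t + Wx \<xi> t \<bullet> F \<xi> t u \<le> - d3 (norm \<xi>)))"

definition iISS_lyapunov_fun :: "('a::euclidean_space \<Rightarrow> real \<Rightarrow> 'a \<Rightarrow> 'a) \<Rightarrow> ('a \<Rightarrow> real \<Rightarrow> real) \<Rightarrow> bool" where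
  "iISS_lyapunov_fun F W \<longleftrightarrow> (\<exists>Wx Wt \<Delta> \<nu>. C1_tv W Wx Wt \<and> unif_proper_pd W \<and>
     classKinf \<Delta> \<and> pos_def_fun \<nu> \<and>
     (\<forall>t \<xi> u. t \<ge> 0 \<longrightarrow> Wt \<xi> t + Wx \<xi> t \<bullet> F \<xi> t u \<le> - \<nu> (norm \<xi>) + \<Delta> (norm u)))"

definition compat_witness :: "('a::euclidean_space \<Rightarrow> real \<Rightarrow> 'a) \<Rightarrow> (real \<Rightarrow> real)
   \<Rightarrow> ('a \<Rightarrow> real \<Rightarrow> real) \<Rightarrow> ('a \<Rightarrow> real \<Rightarrow> 'a) \<Rightarrow> ('a \<Rightarrow> real \<Rightarrow> real) \<Rightarrow> real \<Rightarrow> real \<Rightarrow> bool" where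
  "compat_witness fb \<delta> V Vx Vt c1 c2 \<longleftrightarrow>
     lyap_with fb V Vx Vt \<and> 0 < c1 \<and> c1 < 1 \<and> 0 < c2 \<and>
     (\<forall>\<xi> t. t \<ge> 0 \<longrightarrow> Vt \<xi> t + Vx \<xi> t \<bullet> fb \<xi> t \<le> - c1 * (\<delta> (norm \<xi>))\<^sup>2) \<and>
     (\<forall>\<xi> t. t \<ge> 0 \<longrightarrow> norm (Vx \<xi> t) \<le> \<delta> (norm \<xi>) \<and> norm (fb \<xi> t) \<le> \<delta> (norm \<xi> / 2)) \<and>
     (\<forall>s\<ge>0. \<delta> s \<le> c2 * s)"

definition delta_compatible :: "('a::euclidean_space \<Rightarrow> real \<Rightarrow> 'a) \<Rightarrow> (real \<Rightarrow> real) \<Rightarrow> bool" where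
  "delta_compatible fb \<delta> \<longleftrightarrow> (\<exists>V Vx Vt c1 c2. compat_witness fb \<delta> V Vx Vt c1 c2)"

definition V_alpha :: "('a::euclidean_space \<Rightarrow> real \<Rightarrow> real) \<Rightarrow> ('a \<Rightarrow> real \<Rightarrow> real \<Rightarrow> 'a)
   \<Rightarrow> ('a \<Rightarrow> real \<Rightarrow> 'a) \<Rightarrow> real \<Rightarrow> 'a \<Rightarrow> real \<Rightarrow> real" where
  "V_alpha V f fb \<alpha> \<xi> t =
     V (\<xi> - (sqrt \<alpha> / 2) *\<^sub>R
          integral {t - 2 / sqrt \<alpha> .. t} (\<lambda>s. integral {s..t} (\<lambda>l. f \<xi> l (\<alpha> * l) - fb \<xi> l))) t"

end

theory Submission
  imports Defs
begin


lemma Iint_eq_affine: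
  fixes k :: "real \<Rightarrow> 'b::banach"
  assumes "continuous_on {c..y} k" "c \<le> y"
  shows "integral {c..y} k = (y - c) *\<^sub>R integral {0..1} (\<lambda>\<theta>. k ((y - c) * \<theta> + c))"
proof (cases "y = c")
  case True then show ?thesis by simp
next
  case False
  then have m: "y - c > 0" using assms by simp
  have "(k has_integral integral {c..y} k) (cbox c y)"
    using integrable_integral[OF integrable_continuous_real[OF assms(1)]] by simp
  from has_integral_affinity'[OF this m, of c]
  have "((\<lambda>\<theta>. k ((y - c) * \<theta> + c)) has_integral (integral {c..y} k /\<^sub>R (y - c))) (cbox 0 1)"
    using m by simp
  then have "integral {0..1} (\<lambda>\<theta>. k ((y - c) * \<theta> + c)) = integral {c..y} k /\<^sub>R (y - c)"
    by (simp add: integral_unique)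
  then show ?thesis using m by simp
qed

lemma Iint_cont:
  fixes k :: "'a::topological_space \<Rightarrow> real \<Rightarrow> 'b::banach"
  assumes kc: "continuous_on (UNIV \<times> {c..}) (\<lambda>p. k (fst p) (snd p))"
  shows "continuous_on (UNIV \<times> {c..}) (\<lambda>p. integral {c..snd p} (k (fst p)))"
proof -
  have kc1: "continuous_on {c..y} (k x)" for x y
  proof -
    have "continuous_on {c..y} (\<lambda>l. (x, l))" by (intro continuous_intros)
    moreover have "(\<lambda>l. (x, l)) ` {c..y} \<subseteq> UNIV \<times> {c..}" by auto
    ultimately show ?thesis using continuous_on_compose2[OF kc, of "{c..y}" "\<lambda>l. (x, l)"] by simp
  qed
  have c2: "continuous_on ((UNIV \<times> {c..}) \<times> cbox 0 1)
      (\<lambda>(p, \<theta>). k (fst p) ((snd p - c) * \<theta> + c))"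
  proof -
    have m: "continuous_on ((UNIV \<times> {c..}) \<times> cbox 0 1) (\<lambda>q. (fst (fst q), (snd (fst q) - c) * snd q + c))"
      by (intro continuous_intros)
    have im: "(\<lambda>q. (fst (fst q), (snd (fst q) - c) * snd q + c)) ` ((UNIV \<times> {c..}) \<times> cbox 0 (1::real)) \<subseteq> UNIV \<times> {c..}"
      by (auto simp: mult_nonneg_nonneg)
    have "continuous_on ((UNIV \<times> {c..}) \<times> cbox 0 1) (\<lambda>q. k (fst (fst q)) ((snd (fst q) - c) * snd q + c))"
      using continuous_on_compose2[OF kc m im] by simp
    then show ?thesis by (simp add: case_prod_beta')
  qed
  have "continuous_on (UNIV \<times> {c..}) (\<lambda>p. integral (cbox 0 1) (\<lambda>\<theta>. k (fst p) ((snd p - c) * \<theta> + c)))"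
    by (rule integral_continuous_on_param[OF c2])
  then have "continuous_on (UNIV \<times> {c..}) (\<lambda>p. (snd p - c) *\<^sub>R integral {0..1} (\<lambda>\<theta>. k (fst p) ((snd p - c) * \<theta> + c)))"
    by (auto intro!: continuous_intros)
  then show ?thesis
    by (rule continuous_on_eq) (auto simp: Iint_eq_affine[OF kc1])
qed

lemma Iint_dx:
  fixes k :: "'a::euclidean_space \<Rightarrow> real \<Rightarrow> 'b::banach" and Dk :: "'a \<Rightarrow> real \<Rightarrow> 'a \<Rightarrow>\<^sub>L 'b"
  assumes kc: "continuous_on (UNIV \<times> {c..}) (\<lambda>p. k (fst p) (snd p))"
    and Dkc: "continuous_on (UNIV \<times> {c..}) (\<lambda>p. Dk (fst p) (snd p))"
    and kd: "\<And>x l. c \<le> l \<Longrightarrow> ((\<lambda>x. k x l) has_derivative blinfun_apply (Dk x l)) (at x)"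
  shows "((\<lambda>x. integral {c..y} (k x)) has_derivative blinfun_apply (integral {c..y} (Dk x))) (at x)"
proof -
  have kc1: "continuous_on {c..y} (k x)" for x
  proof -
    have "continuous_on {c..y} (\<lambda>l. (x, l))" by (intro continuous_intros)
    moreover have "(\<lambda>l. (x, l)) ` {c..y} \<subseteq> UNIV \<times> {c..}" by auto
    ultimately show ?thesis using continuous_on_compose2[OF kc, of "{c..y}" "\<lambda>l. (x, l)"] by simp
  qed
  have "continuous_on (UNIV \<times> cbox c y) (\<lambda>p. Dk (fst p) (snd p))"
    by (rule continuous_on_subset[OF Dkc]) auto
  then have cc: "continuous_on (UNIV \<times> cbox c y) (\<lambda>(x, t). Dk x t)"
    by (simp add: case_prod_beta')
  have "((\<lambda>x. integral (cbox c y) (k x)) has_derivative integral (cbox c y) (Dk x)) (at x within UNIV)"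
  proof (rule leibniz_rule[OF _ _ cc])
    fix x t assume "t \<in> cbox c y"
    then show "((\<lambda>x. k x t) has_derivative blinfun_apply (Dk x t)) (at x within UNIV)"
      using kd[of t x] by simp
  next
    fix x show "k x integrable_on cbox c y"
      using integrable_continuous_real[OF kc1[of x]] by simp
  qed auto
  then show ?thesis by simp
qed

lemma Iint_joint:
  fixes k :: "'a::euclidean_space \<Rightarrow> real \<Rightarrow> 'b::banach" and Dk :: "'a \<Rightarrow> real \<Rightarrow> 'a \<Rightarrow>\<^sub>L 'b"
  assumes kc: "continuous_on (UNIV \<times> {c..}) (\<lambda>p. k (fst p) (snd p))"
    and Dkc: "continuous_on (UNIV \<times> {c..}) (\<lambda>p. Dk (fst p) (snd p))"
    and kd: "\<And>x l. c \<le> l \<Longrightarrow> ((\<lambda>x. k x l) has_derivative blinfun_apply (Dk x l)) (at x)"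
    and y: "c < y"
  shows "((\<lambda>p. integral {c..snd p} (k (fst p))) has_derivative
           (\<lambda>h. blinfun_apply (integral {c..y} (Dk x)) (fst h) + snd h *\<^sub>R k x y)) (at (x, y))"
proof -
  have kc1: "continuous_on {c..y} (k x)" for x y
  proof -
    have "continuous_on {c..y} (\<lambda>l. (x, l))" by (intro continuous_intros)
    moreover have "(\<lambda>l. (x, l)) ` {c..y} \<subseteq> UNIV \<times> {c..}" by auto
    ultimately show ?thesis using continuous_on_compose2[OF kc, of "{c..y}" "\<lambda>l. (x, l)"] by simp
  qed
  have fy: "((\<lambda>y. integral {c..y} (k x)) has_derivative blinfun_apply (blinfun_scaleR_left (k x y))) (at y within {c<..})"
    if "y \<in> {c<..}" for x y
  proof -
    have "((\<lambda>u. integral {c..u} (k x)) has_vector_derivative k x y) (at y within {c..y+1})"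
      using that by (intro integral_has_vector_derivative kc1) auto
    moreover have "at y within {c..y+1} = at y" 
      by (rule at_within_interior) (use that in \<open>simp add: interior_atLeastAtMost_real\<close>)
    ultimately have "((\<lambda>u. integral {c..u} (k x)) has_vector_derivative k x y) (at y)"
      by (simp only:)
    then have "((\<lambda>u. integral {c..u} (k x)) has_derivative (\<lambda>h. h *\<^sub>R k x y)) (at y)"
      by (simp add: has_vector_derivative_def)
    moreover have "blinfun_apply (blinfun_scaleR_left (k x y)) = (\<lambda>h. h *\<^sub>R k x y)"
      by (rule ext) simp
    ultimately show ?thesis
      by (metis has_derivative_at_withinI)
  qed
  have "continuous_on (UNIV \<times> {c<..}) (\<lambda>p. k (fst p) (snd p))"
    by (rule continuous_on_subset[OF kc]) auto
  then have "continuous_on (UNIV \<times> {c<..}) (\<lambda>p. blinfun_scaleR_left (k (fst p) (snd p)))"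
    by (intro continuous_intros)
  moreover have "(\<lambda>(x, y). blinfun_scaleR_left (k x y)) = (\<lambda>p. blinfun_scaleR_left (k (fst p) (snd p)))"
    by (simp add: case_prod_beta')
  ultimately have fyc: "continuous (at (x, y) within UNIV \<times> {c<..}) (\<lambda>(x, y). blinfun_scaleR_left (k x y))"
    using y by (simp add: continuous_on_eq_continuous_within)
  have "((\<lambda>(x, y). integral {c..y} (k x)) has_derivative
      (\<lambda>(tx, ty). blinfun_apply (integral {c..y} (Dk x)) tx + blinfun_apply (blinfun_scaleR_left (k x y)) ty))
      (at (x, y) within UNIV \<times> {c<..})"
  proof (rule has_derivative_partialsI)
    show "((\<lambda>x. integral {c..y} (k x)) has_derivative blinfun_apply (integral {c..y} (Dk x))) (at x within UNIV)"
      using Iint_dx[OF kc Dkc kd, of y x] by simp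
    show "\<And>x y. x \<in> UNIV \<Longrightarrow> y \<in> {c<..} \<Longrightarrow> ((\<lambda>y. integral {c..y} (k x)) has_derivative blinfun_apply (blinfun_scaleR_left (k x y))) (at y within {c<..})"
      using fy by blast
    show "continuous (at (x, y) within UNIV \<times> {c<..}) (\<lambda>(x, y). blinfun_scaleR_left (k x y))"
      by (rule fyc)
    show "y \<in> {c<..}" using y by simp
    show "convex {c<..}" by simp
  qed
  moreover have "at (x, y) within UNIV \<times> {c<..} = at (x, y)"
    using y by (intro at_within_open) (auto intro: open_Times)
  ultimately show ?thesis by (simp add: case_prod_beta')
qed


lemma joint_cont_lip:
  fixes k :: "'a::metric_space \<Rightarrow> real \<Rightarrow> 'b::real_normed_vector"
  assumes lip: "\<And>x y l. norm (k x l - k y l) \<le> L * dist x y" and L: "L \<ge> 0"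
    and c: "\<And>x. continuous_on UNIV (k x)"
  shows "continuous_on UNIV (\<lambda>p. k (fst p) (snd p))"
  unfolding continuous_on_iff
proof (intro ballI allI impI)
  fix p0 :: "'a \<times> real" and e :: real
  assume e: "e > 0"
  obtain x0 l0 where p0: "p0 = (x0, l0)" by (cases p0)
  from c[of x0] e obtain d1 where d1: "d1 > 0" "\<And>l. dist l l0 < d1 \<Longrightarrow> dist (k x0 l) (k x0 l0) < e/2"
    unfolding continuous_on_iff by (metis UNIV_I half_gt_zero)
  define d where "d = min d1 (e / (2 * (L + 1)))"
  have d: "d > 0" using d1 e L by (simp add: d_def)
  show "\<exists>d>0. \<forall>p\<in>UNIV. dist p p0 < d \<longrightarrow> dist (k (fst p) (snd p)) (k (fst p0) (snd p0)) < e"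
  proof (intro exI[of _ d] conjI ballI impI d)
    fix p :: "'a \<times> real" assume "dist p p0 < d"
    obtain x l where p: "p = (x, l)" by (cases p)
    have dx: "dist x x0 < d" and dl: "dist l l0 < d"
      using \<open>dist p p0 < d\<close> dist_fst_le[of p p0] dist_snd_le[of p p0] p p0 by auto
    have "norm (k x l - k x0 l) \<le> L * dist x x0" by (rule lip)
    also have "\<dots> \<le> L * (e / (2 * (L + 1)))"
      using dx L by (intro mult_left_mono) (auto simp: d_def)
    also have "\<dots> < e / 2"
      using L e by (simp add: field_simps)
    finally have 1: "norm (k x l - k x0 l) < e/2" .
    have 2: "dist (k x0 l) (k x0 l0) < e/2" using d1(2)[of l] dl by (simp add: d_def)
    have "dist (k x l) (k x0 l0) \<le> norm (k x l - k x0 l) + dist (k x0 l) (k x0 l0)"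
      by (metis dist_norm dist_triangle)
    then show "dist (k (fst p) (snd p)) (k (fst p0) (snd p0)) < e"
      using 1 2 p p0 by simp
  qed
qed

locale thm2 =
  fixes f :: "'a::euclidean_space \<Rightarrow> real \<Rightarrow> real \<Rightarrow> 'a"
    and fb :: "'a \<Rightarrow> real \<Rightarrow> 'a"
    and Df :: "'a \<Rightarrow> real \<Rightarrow> real \<Rightarrow> 'a \<Rightarrow>\<^sub>L 'a"
    and Dfb :: "'a \<Rightarrow> real \<Rightarrow> 'a \<Rightarrow>\<^sub>L 'a"
    and \<delta> N :: "real \<Rightarrow> real"
    and \<eta>o K c1 c2 :: real
    and V Vt :: "'a \<Rightarrow> real \<Rightarrow> real"
    and Vx :: "'a \<Rightarrow> real \<Rightarrow> 'a"
  assumes f_cont_t: "\<And>x. continuous_on UNIV (\<lambda>p. f x (fst p) (snd p))"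
    and f_deriv: "\<And>x t \<tau>. ((\<lambda>y. f y t \<tau>) has_derivative blinfun_apply (Df x t \<tau>)) (at x)"
    and Df_cont: "continuous_on UNIV (\<lambda>p. Df (fst p) (fst (snd p)) (snd (snd p)))"
    and fb_cont_t: "\<And>x. continuous_on UNIV (fb x)"
    and fb_deriv: "\<And>x t. ((\<lambda>y. fb y t) has_derivative blinfun_apply (Dfb x t)) (at x)"
    and Dfb_cont: "continuous_on UNIV (\<lambda>p. Dfb (fst p) (snd p))"
    and \<delta>_K: "classK \<delta>"
    and \<eta>o_pos: "\<eta>o > 0" and K_gt: "K > 1" and N_M: "classM N"
    and avg: "\<And>\<eta> x r. \<eta> \<ge> \<eta>o \<Longrightarrow>
       norm (integral {r - 1/\<eta> .. r + 1/\<eta>} (\<lambda>l. f x l (\<eta>\<^sup>2 * l) - fb x l)) \<le> \<delta> (norm x / 2) * N \<eta>"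
    and Dfb_bound: "\<And>x t. norm (Dfb x t) \<le> K"
    and Df_bound: "\<And>x t \<alpha>. \<alpha> > 0 \<Longrightarrow> norm (Df x t (\<alpha> * t)) \<le> K"
    and f_bound: "\<And>x t \<alpha>. \<alpha> > 0 \<Longrightarrow> norm (f x t (\<alpha> * t)) \<le> \<delta> (norm x / 2)"
    and V_wit: "compat_witness fb \<delta> V Vx Vt c1 c2"
begin

lemma \<delta>_nonneg: "s \<ge> 0 \<Longrightarrow> \<delta> s \<ge> 0"
  using \<delta>_K unfolding classK_def pos_def_fun_def
  by (metis less_eq_real_def)

lemma \<delta>_mono: "0 \<le> s \<Longrightarrow> s \<le> s' \<Longrightarrow> \<delta> s \<le> \<delta> s'"
  using \<delta>_K unfolding classK_def strict_mono_on_def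
  by (metis atLeast_iff less_eq_real_def order_trans)

lemma f_cont_l: "continuous_on UNIV (\<lambda>l. f x l (\<alpha> * l))"
proof -
  have "continuous_on UNIV (\<lambda>l. (l, \<alpha> * l))" by (intro continuous_intros)
  then show ?thesis using continuous_on_compose2[OF f_cont_t[of x], of UNIV "\<lambda>l. (l, \<alpha> * l)"] by simp
qed

lemma f_lip: "\<alpha> > 0 \<Longrightarrow> norm (f x l (\<alpha> * l) - f y l (\<alpha> * l)) \<le> K * norm (x - y)"
  by (rule differentiable_bound[of UNIV "\<lambda>x. f x l (\<alpha> * l)" "\<lambda>x. blinfun_apply (Df x l (\<alpha> * l))"])
     (auto simp: f_deriv Df_bound norm_blinfun.rep_eq[symmetric] has_derivative_at_withinI)

lemma fb_lip: "norm (fb x l - fb y l) \<le> K * norm (x - y)"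
  by (rule differentiable_bound[of UNIV "\<lambda>x. fb x l" "\<lambda>x. blinfun_apply (Dfb x l)"])
     (auto simp: fb_deriv Dfb_bound norm_blinfun.rep_eq[symmetric] has_derivative_at_withinI)

lemma fb_bound_all: "norm (fb x l) \<le> \<delta> (norm x / 2)"
proof -
  define D where "D = \<delta> (norm x / 2)"
  have D0: "D \<ge> 0" unfolding D_def by (rule \<delta>_nonneg) simp
  have main: "norm (fb x l) \<le> D + e * (1 + D)" if e: "e > 0" for e
  proof -
    obtain h0 where h0: "h0 > 0" "\<And>s. dist s l < h0 \<Longrightarrow> dist (fb x s) (fb x l) < e"
      using fb_cont_t[of x] e unfolding continuous_on_iff by (metis UNIV_I)
    have "((\<lambda>\<eta>. \<eta> * N \<eta>) \<longlongrightarrow> 0) at_top" using N_M unfolding classM_def .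
    then have "eventually (\<lambda>\<eta>. dist (\<eta> * N \<eta>) 0 < e) at_top" using e by (rule tendstoD)
    then obtain E where E: "\<And>\<eta>. \<eta> \<ge> E \<Longrightarrow> \<bar>\<eta> * N \<eta>\<bar> < e"
      unfolding eventually_at_top_linorder by auto
    define \<eta> where "\<eta> = max (max \<eta>o E) (2 / h0) + 1"
    have \<eta>pos: "\<eta> > 0" using \<eta>o_pos by (simp add: \<eta>_def)
    have \<eta>o: "\<eta> \<ge> \<eta>o" and \<eta>E: "\<eta> \<ge> E" by (auto simp: \<eta>_def)
    have "\<eta> > 2 / h0" by (simp add: \<eta>_def)
    then have ih: "1 / \<eta> < h0" using h0 \<eta>pos by (simp add: field_simps)
    define I where "I = {l - 1/\<eta> .. l + 1/\<eta>}"
    have lenI: "l - 1/\<eta> \<le> l + 1/\<eta>" using \<eta>pos by simp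
    have cf: "continuous_on I (\<lambda>s. f x s (\<eta>\<^sup>2 * s))"
      by (rule continuous_on_subset[OF f_cont_l]) auto
    have cfb: "continuous_on I (fb x)"
      by (rule continuous_on_subset[OF fb_cont_t]) auto
    have "\<eta>\<^sup>2 > 0" using \<eta>pos by simp
    then have nf: "norm (integral I (\<lambda>s. f x s (\<eta>\<^sup>2 * s))) \<le> D * (2 / \<eta>)"
      using integral_bound[OF lenI cf[unfolded I_def], of D] f_bound by (auto simp: D_def I_def)
    have na: "norm (integral I (\<lambda>s. f x s (\<eta>\<^sup>2 * s) - fb x s)) \<le> D * N \<eta>"
      using avg[OF \<eta>o] unfolding I_def D_def .
    have "norm (integral I (\<lambda>s. fb x s - fb x l)) \<le> e * (2 / \<eta>)"
    proof -
      have "continuous_on {l - 1/\<eta> .. l + 1/\<eta>} (\<lambda>s. fb x s - fb x l)"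
        using cfb unfolding I_def by (intro continuous_intros)
      moreover have "norm (fb x s - fb x l) \<le> e" if "s \<in> {l - 1/\<eta> .. l + 1/\<eta>}" for s
      proof -
        have "dist s l < h0" using that ih by (auto simp: dist_real_def abs_le_iff)
        then show ?thesis using h0(2)[of s] by (simp add: dist_norm)
      qed
      ultimately show ?thesis
        using integral_bound[OF lenI, of "\<lambda>s. fb x s - fb x l" e] by (simp add: I_def)
    qed
    moreover have e1: "integral I (\<lambda>s. fb x s - fb x l) = integral I (fb x) - (2 / \<eta>) *\<^sub>R fb x l"
      using cfb lenI by (simp add: I_def integral_diff integrable_continuous_real)
    moreover have e2: "integral I (fb x) = integral I (\<lambda>s. f x s (\<eta>\<^sup>2 * s)) - integral I (\<lambda>s. f x s (\<eta>\<^sup>2 * s) - fb x s)"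
      using cfb cf by (simp add: I_def integral_diff integrable_continuous_real)
    ultimately have "norm ((2 / \<eta>) *\<^sub>R fb x l) \<le> D * (2 / \<eta>) + D * N \<eta> + e * (2 / \<eta>)"
    proof -
      let ?A = "integral I (\<lambda>s. f x s (\<eta>\<^sup>2 * s))"
      let ?B = "integral I (\<lambda>s. f x s (\<eta>\<^sup>2 * s) - fb x s)"
      let ?C = "integral I (\<lambda>s. fb x s - fb x l)"
      have eq: "(2 / \<eta>) *\<^sub>R fb x l = ?A - ?B - ?C" using e1 e2 by (simp add: algebra_simps)
      have "norm (?A - ?B - ?C) \<le> norm (?A - ?B) + norm ?C" by (rule norm_triangle_ineq4)
      moreover have "norm (?A - ?B) \<le> norm ?A + norm ?B" by (rule norm_triangle_ineq4)
      moreover note nf na \<open>norm ?C \<le> e * (2 / \<eta>)\<close>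
      ultimately show ?thesis unfolding eq by linarith
    qed
    then have "(2 / \<eta>) * norm (fb x l) \<le> D * (2 / \<eta>) + D * N \<eta> + e * (2 / \<eta>)"
      using \<eta>pos by simp
    then have "norm (fb x l) \<le> D + D * (\<eta> * N \<eta>) / 2 + e"
      using \<eta>pos by (simp add: field_simps)
    also have "D * (\<eta> * N \<eta>) / 2 \<le> D * e"
    proof -
      have "\<eta> * N \<eta> \<le> e" using E[OF \<eta>E] by simp
      then have "D * (\<eta> * N \<eta>) \<le> D * e" using D0 by (simp add: mult_left_mono)
      moreover have "D * e \<ge> 0" using D0 e by simp
      ultimately show ?thesis by linarith
    qed
    finally show ?thesis by (simp add: algebra_simps)
  qed
  have "norm (fb x l) \<le> D + e" if "e > 0" for e
  proof -
    have "e / (1 + D) * (1 + D) = e" using D0 by (simp add: field_simps)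
    moreover have "e / (1 + D) > 0" using that D0 by simp
    ultimately show ?thesis using main[of "e / (1 + D)"] by simp
  qed
  then show ?thesis unfolding D_def by (rule field_le_epsilon)
qed

end


locale thm2a = thm2 +
  fixes \<alpha> :: real
  assumes \<alpha>_pos: "\<alpha> > 0"
    and big1: "sqrt \<alpha> \<ge> \<eta>o" and big2: "sqrt \<alpha> \<ge> 4 * c2" and big3: "sqrt \<alpha> \<ge> 4 * K"
    and big4: "8 * K / sqrt \<alpha> \<le> c1 / 4" and big5: "sqrt \<alpha> * \<bar>N (sqrt \<alpha>)\<bar> \<le> c1 / 2"
begin

definition "a = sqrt \<alpha>"
definition "T = 2 / a"
definition "c0 = - T - 1"
definition "g \<xi> l = f \<xi> l (\<alpha> * l) - fb \<xi> l"
definition "Dg \<xi> l = Df \<xi> l (\<alpha> * l) - Dfb \<xi> l"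
definition "G \<xi> y = integral {c0..y} (g \<xi>)"
definition "B \<xi> y = integral {c0..y} (Dg \<xi>)"
definition "H \<xi> y = integral {c0..y} (G \<xi>)"
definition "BH \<xi> y = integral {c0..y} (B \<xi>)"
definition "w \<xi> t = (a / 2) *\<^sub>R (T *\<^sub>R G \<xi> t - H \<xi> t + H \<xi> (t - T))"
definition "Dw \<xi> t = (a / 2) *\<^sub>R (T *\<^sub>R B \<xi> t - BH \<xi> t + BH \<xi> (t - T))"
definition "wt \<xi> t = (a / 2) *\<^sub>R (T *\<^sub>R g \<xi> t - G \<xi> t + G \<xi> (t - T))"

lemma a_pos: "a > 0" using \<alpha>_pos by (simp add: a_def)
lemma T_pos: "T > 0" using a_pos by (simp add: T_def)
lemma aT: "a / 2 * T = 1" using a_pos by (simp add: T_def)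
lemma c0T: "c0 < - T" by (simp add: c0_def)

lemma g_lip: "norm (g x l - g y l) \<le> (2 * K) * dist x y"
proof -
  have "norm (g x l - g y l) = norm ((f x l (\<alpha> * l) - f y l (\<alpha> * l)) - (fb x l - fb y l))"
    by (simp add: g_def algebra_simps)
  also have "\<dots> \<le> norm (f x l (\<alpha> * l) - f y l (\<alpha> * l)) + norm (fb x l - fb y l)"
    by (rule norm_triangle_ineq4)
  also have "\<dots> \<le> K * norm (x - y) + K * norm (x - y)"
    using f_lip[OF \<alpha>_pos] fb_lip by (intro add_mono) auto
  finally show ?thesis by (simp add: dist_norm)
qed

lemma g_cont: "continuous_on UNIV (\<lambda>p. g (fst p) (snd p))"
proof (rule joint_cont_lip[OF g_lip])
  show "0 \<le> 2 * K" using K_gt by simp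
  fix x show "continuous_on UNIV (g x)"
    unfolding g_def using f_cont_l fb_cont_t by (intro continuous_intros) auto
qed

lemma Dg_cont: "continuous_on UNIV (\<lambda>p. Dg (fst p) (snd p))"
proof -
  have "continuous_on UNIV (\<lambda>p::'a\<times>real. (fst p, (snd p, \<alpha> * snd p)))" by (intro continuous_intros)
  then have 1: "continuous_on UNIV (\<lambda>p::'a\<times>real. Df (fst p) (snd p) (\<alpha> * snd p))"
    using continuous_on_compose2[OF Df_cont, of UNIV "\<lambda>p::'a\<times>real. (fst p, (snd p, \<alpha> * snd p))"] by simp
  show ?thesis unfolding Dg_def using 1 Dfb_cont by (intro continuous_intros) auto
qed

lemma g_deriv: "((\<lambda>x. g x l) has_derivative blinfun_apply (Dg x l)) (at x)"
proof -
  have "((\<lambda>x. f x l (\<alpha> * l) - fb x l) has_derivative (\<lambda>h. blinfun_apply (Df x l (\<alpha> * l)) h - blinfun_apply (Dfb x l) h)) (at x)"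
    by (intro has_derivative_diff f_deriv fb_deriv)
  moreover have "blinfun_apply (Dg x l) = (\<lambda>h. blinfun_apply (Df x l (\<alpha> * l)) h - blinfun_apply (Dfb x l) h)"
    by (rule ext) (simp add: Dg_def blinfun.diff_left)
  ultimately show ?thesis by (simp add: g_def)
qed

lemma g_cont0: "continuous_on (UNIV \<times> {c0..}) (\<lambda>p. g (fst p) (snd p))"
  by (rule continuous_on_subset[OF g_cont]) auto
lemma Dg_cont0: "continuous_on (UNIV \<times> {c0..}) (\<lambda>p. Dg (fst p) (snd p))"
  by (rule continuous_on_subset[OF Dg_cont]) auto

lemma G_cont: "continuous_on (UNIV \<times> {c0..}) (\<lambda>p. G (fst p) (snd p))"
  using Iint_cont[OF g_cont0] by (simp add: G_def)
lemma B_cont: "continuous_on (UNIV \<times> {c0..}) (\<lambda>p. B (fst p) (snd p))"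
  using Iint_cont[OF Dg_cont0] by (simp add: B_def)
lemma BH_cont: "continuous_on (UNIV \<times> {c0..}) (\<lambda>p. BH (fst p) (snd p))"
  using Iint_cont[OF B_cont] by (simp add: BH_def)
lemma G_dx: "((\<lambda>x. G x y) has_derivative blinfun_apply (B x y)) (at x)"
  using Iint_dx[OF g_cont0 Dg_cont0 g_deriv] by (simp add: G_def B_def)
lemma G_joint: "c0 < y \<Longrightarrow> ((\<lambda>p. G (fst p) (snd p)) has_derivative
    (\<lambda>h. blinfun_apply (B x y) (fst h) + snd h *\<^sub>R g x y)) (at (x, y))"
  using Iint_joint[OF g_cont0 Dg_cont0 g_deriv] by (simp add: G_def B_def)
lemma H_joint: "c0 < y \<Longrightarrow> ((\<lambda>p. H (fst p) (snd p)) has_derivative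
    (\<lambda>h. blinfun_apply (BH x y) (fst h) + snd h *\<^sub>R G x y)) (at (x, y))"
  using Iint_joint[OF G_cont B_cont G_dx] by (simp add: H_def BH_def)

lemma Hs_joint:
  assumes "c0 < y - T"
  shows "((\<lambda>p. H (fst p) (snd p - T)) has_derivative
    (\<lambda>h. blinfun_apply (BH x (y - T)) (fst h) + snd h *\<^sub>R G x (y - T))) (at (x, y))"
proof -
  have sh: "((\<lambda>p. (fst p, snd p - T)) has_derivative (\<lambda>h. (fst h, snd h))) (at (x, y))"
    by (auto intro!: derivative_eq_intros)
  have "((\<lambda>p. H (fst p) (snd p)) has_derivative
    (\<lambda>h. blinfun_apply (BH x (y - T)) (fst h) + snd h *\<^sub>R G x (y - T))) (at ((\<lambda>p. (fst p, snd p - T)) (x, y)))"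
    using H_joint[OF assms, of x] by simp
  from diff_chain_at[OF sh this] show ?thesis by (simp add: o_def)
qed

lemma w_deriv:
  assumes t: "t \<ge> 0"
  shows "((\<lambda>p. w (fst p) (snd p)) has_derivative (\<lambda>h. blinfun_apply (Dw x t) (fst h) + snd h *\<^sub>R wt x t)) (at (x, t))"
proof -
  have t1: "c0 < t" and t2: "c0 < t - T" using t c0T T_pos by auto
  have "((\<lambda>p. (a / 2) *\<^sub>R (T *\<^sub>R G (fst p) (snd p) - H (fst p) (snd p) + H (fst p) (snd p - T))) has_derivative
     (\<lambda>h. (a / 2) *\<^sub>R (T *\<^sub>R (blinfun_apply (B x t) (fst h) + snd h *\<^sub>R g x t)
        - (blinfun_apply (BH x t) (fst h) + snd h *\<^sub>R G x t)
        + (blinfun_apply (BH x (t - T)) (fst h) + snd h *\<^sub>R G x (t - T))))) (at (x, t))"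
    by (intro has_derivative_scaleR_right has_derivative_add has_derivative_diff G_joint[OF t1]
        H_joint[OF t1] Hs_joint[OF t2])
  then show ?thesis
    unfolding w_def[abs_def] 
    by (rule has_derivative_eq_rhs) (auto simp: Dw_def wt_def blinfun.bilinear_simps algebra_simps)
qed

end


lemma adj_inner:
  fixes L :: "'a::euclidean_space \<Rightarrow>\<^sub>L 'a" and u v :: 'a
  shows "(\<Sum>b\<in>Basis. (u \<bullet> (b - blinfun_apply L b)) *\<^sub>R b) \<bullet> v = u \<bullet> (v - blinfun_apply L v)"
proof -
  have Lv: "blinfun_apply L v = (\<Sum>b\<in>Basis. (v \<bullet> b) *\<^sub>R blinfun_apply L b)"
  proof -
    have "blinfun_apply L v = blinfun_apply L (\<Sum>b\<in>Basis. (v \<bullet> b) *\<^sub>R b)"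
      by (simp add: euclidean_representation)
    then show ?thesis by (simp add: blinfun.sum_right blinfun.scaleR_right)
  qed
  have "v - blinfun_apply L v = (\<Sum>b\<in>Basis. (v \<bullet> b) *\<^sub>R b) - (\<Sum>b\<in>Basis. (v \<bullet> b) *\<^sub>R blinfun_apply L b)"
    by (simp add: euclidean_representation Lv)
  also have "\<dots> = (\<Sum>b\<in>Basis. (v \<bullet> b) *\<^sub>R (b - blinfun_apply L b))"
    by (simp add: sum_subtractf scaleR_diff_right)
  finally have "u \<bullet> (v - blinfun_apply L v) = (\<Sum>b\<in>Basis. (v \<bullet> b) * (u \<bullet> (b - blinfun_apply L b)))"
    by (simp add: inner_sum_right)
  moreover have "(\<Sum>b\<in>Basis. (u \<bullet> (b - blinfun_apply L b)) *\<^sub>R b) \<bullet> v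
      = (\<Sum>b\<in>Basis. (u \<bullet> (b - blinfun_apply L b)) * (b \<bullet> v))"
    by (simp add: inner_sum_left)
  ultimately show ?thesis by (simp add: inner_commute mult.commute)
qed

context thm2a
begin

lemma g_cont1: "continuous_on S (g \<xi>)"
proof -
  have "continuous_on UNIV (\<lambda>l. (\<xi>, l))" by (intro continuous_intros)
  then have "continuous_on UNIV (g \<xi>)"
    using continuous_on_compose2[OF g_cont, of UNIV "\<lambda>l. (\<xi>, l)"] by simp
  then show ?thesis by (rule continuous_on_subset) auto
qed

lemma G_cont1: "S \<subseteq> {c0..} \<Longrightarrow> continuous_on S (G \<xi>)"
proof -
  assume S: "S \<subseteq> {c0..}"
  have "continuous_on S (\<lambda>l. (\<xi>, l))" by (intro continuous_intros)
  moreover have "(\<lambda>l. (\<xi>, l)) ` S \<subseteq> UNIV \<times> {c0..}" using S by auto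
  ultimately show ?thesis
    using continuous_on_compose2[OF G_cont, of S "\<lambda>l. (\<xi>, l)"] by simp
qed

lemma w_eq:
  assumes t: "t \<ge> 0"
  shows "(sqrt \<alpha> / 2) *\<^sub>R integral {t - 2 / sqrt \<alpha> .. t} (\<lambda>s. integral {s..t} (\<lambda>l. f \<xi> l (\<alpha> * l) - fb \<xi> l))
     = w \<xi> t"
proof -
  have tT: "c0 \<le> t - T" "t - T \<le> t" using t c0T T_pos by auto
  have gi: "g \<xi> integrable_on {c0..t}" by (rule integrable_continuous_real[OF g_cont1])
  have 1: "integral {s..t} (g \<xi>) = G \<xi> t - G \<xi> s" if "s \<in> {t - T..t}" for s
  proof -
    have "integral {c0..s} (g \<xi>) + integral {s..t} (g \<xi>) = integral {c0..t} (g \<xi>)"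
      using that tT by (intro Henstock_Kurzweil_Integration.integral_combine gi) auto
    then show ?thesis by (simp add: G_def algebra_simps)
  qed
  have Gi: "G \<xi> integrable_on {t - T..t}"
    by (rule integrable_continuous_real[OF G_cont1]) (use tT in auto)
  have "integral {t - T..t} (\<lambda>s. integral {s..t} (g \<xi>)) = integral {t - T..t} (\<lambda>s. G \<xi> t - G \<xi> s)"
    using 1 by (rule integral_cong)
  also have "\<dots> = T *\<^sub>R G \<xi> t - integral {t - T..t} (G \<xi>)"
  proof -
    have "integral {t - T..t} (\<lambda>s. G \<xi> t - G \<xi> s) = integral {t - T..t} (\<lambda>s. G \<xi> t) - integral {t - T..t} (G \<xi>)"
      by (rule Henstock_Kurzweil_Integration.integral_diff[OF integrable_continuous_real[OF continuous_on_const] Gi])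
    moreover have "integral {t - T..t} (\<lambda>s. G \<xi> t) = T *\<^sub>R G \<xi> t"
      using T_pos by (simp add: integral_const_real)
    ultimately show ?thesis by simp
  qed
  also have "integral {t - T..t} (G \<xi>) = H \<xi> t - H \<xi> (t - T)"
  proof -
    have "integral {c0..t-T} (G \<xi>) + integral {t-T..t} (G \<xi>) = integral {c0..t} (G \<xi>)"
      using tT by (intro Henstock_Kurzweil_Integration.integral_combine integrable_continuous_real[OF G_cont1]) auto
    then show ?thesis by (simp add: H_def algebra_simps)
  qed
  finally have fin: "integral {t - T..t} (\<lambda>s. integral {s..t} (g \<xi>)) = T *\<^sub>R G \<xi> t - (H \<xi> t - H \<xi> (t - T))" .
  have geq: "(\<lambda>l. f \<xi> l (\<alpha> * l) - fb \<xi> l) = g \<xi>" by (rule ext) (simp add: g_def)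
  have e2: "sqrt \<alpha> = a" by (simp add: a_def)
  have e1: "2 / a = T" by (simp add: T_def)
  show ?thesis
    unfolding geq e2 e1 fin w_def by (simp add: algebra_simps)
qed

end


context thm2a
begin

definition "z \<xi> t = \<xi> - w \<xi> t"
definition "Wx \<xi> t = (\<Sum>b\<in>Basis. (Vx (z \<xi> t) t \<bullet> (b - blinfun_apply (Dw \<xi> t) b)) *\<^sub>R b)"
definition "Wt \<xi> t = Vt (z \<xi> t) t - Vx (z \<xi> t) t \<bullet> wt \<xi> t"

lemma V_C1: "C1_tv V Vx Vt"
  using V_wit unfolding compat_witness_def lyap_with_def by blast

lemma Wx_inner: "Wx \<xi> t \<bullet> v = Vx (z \<xi> t) t \<bullet> (v - blinfun_apply (Dw \<xi> t) v)"
  unfolding Wx_def by (rule adj_inner)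

lemma Valpha_eq: "t \<ge> 0 \<Longrightarrow> V_alpha V f fb \<alpha> \<xi> t = V (z \<xi> t) t"
  unfolding V_alpha_def z_def using w_eq by simp

lemma m_deriv:
  assumes t: "t \<ge> 0"
  shows "((\<lambda>p. (fst p - w (fst p) (snd p), snd p)) has_derivative
     (\<lambda>h. (fst h - (blinfun_apply (Dw \<xi> t) (fst h) + snd h *\<^sub>R wt \<xi> t), snd h))) (at (\<xi>, t))"
proof -
  have f1: "((\<lambda>p::'a\<times>real. fst p) has_derivative (\<lambda>h. fst h)) (at (\<xi>, t))"
    by (rule bounded_linear_imp_has_derivative) (rule bounded_linear_fst)
  have f2: "((\<lambda>p::'a\<times>real. snd p) has_derivative (\<lambda>h. snd h)) (at (\<xi>, t))"
    by (rule bounded_linear_imp_has_derivative) (rule bounded_linear_snd)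
  show ?thesis
    by (intro has_derivative_Pair has_derivative_diff f1 f2 w_deriv[OF t])
qed

lemma w_cont: "continuous_on (UNIV \<times> {0..}) (\<lambda>p. w (fst p) (snd p))"
proof (rule continuous_at_imp_continuous_on, rule ballI)
  fix p :: "'a \<times> real" assume "p \<in> UNIV \<times> {0..}"
  then obtain x t where p: "p = (x, t)" "t \<ge> 0" by auto
  show "isCont (\<lambda>p. w (fst p) (snd p)) p"
    unfolding p(1) by (rule has_derivative_continuous[OF w_deriv[OF p(2)]])
qed

lemma shift_cont:
  fixes F :: "'a \<Rightarrow> real \<Rightarrow> 'c::topological_space"
  assumes c: "continuous_on (UNIV \<times> {c0..}) (\<lambda>p. F (fst p) (snd p))" and s: "s \<le> T"
  shows "continuous_on (UNIV \<times> {0..}) (\<lambda>p. F (fst p) (snd p - s))"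
proof -
  have "continuous_on (UNIV \<times> {0..}) (\<lambda>p::'a\<times>real. (fst p, snd p - s))" by (intro continuous_intros)
  moreover have "(\<lambda>p::'a\<times>real. (fst p, snd p - s)) ` (UNIV \<times> {0..}) \<subseteq> UNIV \<times> {c0..}"
    using s c0T by auto
  ultimately show ?thesis
    using continuous_on_compose2[OF c, of "UNIV \<times> {0..}" "\<lambda>p::'a\<times>real. (fst p, snd p - s)"] by simp
qed

lemma Dw_cont: "continuous_on (UNIV \<times> {0..}) (\<lambda>p. Dw (fst p) (snd p))"
proof -
  have 1: "continuous_on (UNIV \<times> {0..}) (\<lambda>p. B (fst p) (snd p - 0))"
    by (rule shift_cont[OF B_cont]) (use T_pos in simp)
  have 2: "continuous_on (UNIV \<times> {0..}) (\<lambda>p. BH (fst p) (snd p - 0))"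
    by (rule shift_cont[OF BH_cont]) (use T_pos in simp)
  have 3: "continuous_on (UNIV \<times> {0..}) (\<lambda>p. BH (fst p) (snd p - T))"
    by (rule shift_cont[OF BH_cont]) simp
  show ?thesis unfolding Dw_def using 1 2 3 by (intro continuous_intros) auto
qed

lemma wt_cont: "continuous_on (UNIV \<times> {0..}) (\<lambda>p. wt (fst p) (snd p))"
proof -
  have 1: "continuous_on (UNIV \<times> {0..}) (\<lambda>p. g (fst p) (snd p))"
    by (rule continuous_on_subset[OF g_cont]) auto
  have 2: "continuous_on (UNIV \<times> {0..}) (\<lambda>p. G (fst p) (snd p - 0))"
    by (rule shift_cont[OF G_cont]) (use T_pos in simp)
  have 3: "continuous_on (UNIV \<times> {0..}) (\<lambda>p. G (fst p) (snd p - T))"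
    by (rule shift_cont[OF G_cont]) simp
  show ?thesis unfolding wt_def using 1 2 3 by (intro continuous_intros) auto
qed

lemma Vcomp_cont:
  fixes F :: "'a \<Rightarrow> real \<Rightarrow> 'c::topological_space"
  assumes c: "continuous_on (UNIV \<times> {0..}) (\<lambda>p. F (fst p) (snd p))"
  shows "continuous_on (UNIV \<times> {0..}) (\<lambda>p. F (z (fst p) (snd p)) (snd p))"
proof -
  have "continuous_on (UNIV \<times> {0..}) (\<lambda>p::'a\<times>real. (fst p - w (fst p) (snd p), snd p))"
    using w_cont by (intro continuous_intros) auto
  moreover have "(\<lambda>p::'a\<times>real. (fst p - w (fst p) (snd p), snd p)) ` (UNIV \<times> {0..}) \<subseteq> UNIV \<times> {0..}"
    by auto
  ultimately show ?thesis
    using continuous_on_compose2[OF c, of "UNIV \<times> {0..}" "\<lambda>p::'a\<times>real. (fst p - w (fst p) (snd p), snd p)"]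
    by (simp add: z_def)
qed

lemma Walpha_C1: "C1_tv (V_alpha V f fb \<alpha>) Wx Wt"
proof -
  have Vd: "\<And>\<xi> t. t \<ge> 0 \<Longrightarrow> ((\<lambda>p. V (fst p) (snd p)) has_derivative (\<lambda>h. Vx \<xi> t \<bullet> fst h + Vt \<xi> t * snd h))
          (at (\<xi>, t) within UNIV \<times> {0..})"
    and Vxc: "continuous_on (UNIV \<times> {0..}) (\<lambda>p. Vx (fst p) (snd p))"
    and Vtc: "continuous_on (UNIV \<times> {0..}) (\<lambda>p. Vt (fst p) (snd p))"
    using V_C1 unfolding C1_tv_def by auto
  let ?S = "UNIV \<times> {0::real..}"
  let ?m = "\<lambda>p::'a\<times>real. (fst p - w (fst p) (snd p), snd p)"
  have der: "((\<lambda>p. V_alpha V f fb \<alpha> (fst p) (snd p)) has_derivative (\<lambda>h. Wx \<xi> t \<bullet> fst h + Wt \<xi> t * snd h))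
          (at (\<xi>, t) within ?S)" if t: "t \<ge> 0" for \<xi> t
  proof -
    let ?m' = "\<lambda>h. (fst h - (blinfun_apply (Dw \<xi> t) (fst h) + snd h *\<^sub>R wt \<xi> t), snd h)"
    have md: "(?m has_derivative ?m') (at (\<xi>, t) within ?S)"
      by (rule has_derivative_at_withinI[OF m_deriv[OF t]])
    have Vd': "((\<lambda>q. V (fst q) (snd q)) has_derivative (\<lambda>h. Vx (fst q) (snd q) \<bullet> fst h + Vt (fst q) (snd q) * snd h))
          (at q within ?S)" if "q \<in> ?S" for q
      using Vd[of "snd q" "fst q"] that by (cases q) auto
    have "((\<lambda>p. V (fst (?m p)) (snd (?m p))) has_derivative
        (\<lambda>h. Vx (fst (?m (\<xi>, t))) (snd (?m (\<xi>, t))) \<bullet> fst (?m' h) + Vt (fst (?m (\<xi>, t))) (snd (?m (\<xi>, t))) * snd (?m' h)))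
        (at (\<xi>, t) within ?S)"
      by (rule has_derivative_in_compose2[of ?S _ _ ?m, OF Vd' _ _ md]) (use t in auto)
    then have "((\<lambda>p. V (fst (?m p)) (snd (?m p))) has_derivative
        (\<lambda>h. Wx \<xi> t \<bullet> fst h + Wt \<xi> t * snd h)) (at (\<xi>, t) within ?S)"
    proof (rule has_derivative_eq_rhs)
      show "(\<lambda>h. Vx (fst (?m (\<xi>, t))) (snd (?m (\<xi>, t))) \<bullet> fst (?m' h) + Vt (fst (?m (\<xi>, t))) (snd (?m (\<xi>, t))) * snd (?m' h))
          = (\<lambda>h. Wx \<xi> t \<bullet> fst h + Wt \<xi> t * snd h)"
        by (rule ext) (simp add: Wx_inner Wt_def z_def inner_diff_right inner_add_right algebra_simps)
    qed
    then show ?thesis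
    proof (rule has_derivative_transform_within[OF _ zero_less_one])
      show "(\<xi>, t) \<in> ?S" using t by simp
      fix p :: "'a \<times> real" assume "p \<in> ?S"
      then show "V (fst (?m p)) (snd (?m p)) = V_alpha V f fb \<alpha> (fst p) (snd p)"
        by (auto simp: Valpha_eq z_def)
    qed
  qed
  have c1: "continuous_on ?S (\<lambda>p. Wx (fst p) (snd p))"
    unfolding Wx_def using Vcomp_cont[OF Vxc] Dw_cont by (intro continuous_intros) auto
  have c2: "continuous_on ?S (\<lambda>p. Wt (fst p) (snd p))"
    unfolding Wt_def using Vcomp_cont[OF Vxc] Vcomp_cont[OF Vtc] wt_cont by (intro continuous_intros) auto
  show ?thesis unfolding C1_tv_def using der c1 c2 by blast
qed

end


lemma double_int_bound:
  fixes k :: "real \<Rightarrow> 'b::banach"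
  assumes cont: "continuous_on {c..} k" and bnd: "\<And>l. c \<le> l \<Longrightarrow> norm (k l) \<le> M"
    and tT: "c \<le> t - T" and T0: "T \<ge> 0"
  shows "norm (T *\<^sub>R integral {c..t} k - integral {c..t} (\<lambda>y. integral {c..y} k)
            + integral {c..t - T} (\<lambda>y. integral {c..y} k)) \<le> M * T * T"
proof -
  define I where "I y = integral {c..y} k" for y
  have kc: "continuous_on {c..b} k" for b by (rule continuous_on_subset[OF cont]) auto
  have Ic: "continuous_on {c..b} I" for b
    unfolding I_def by (rule indefinite_integral_continuous_1[OF integrable_continuous_real[OF kc]])
  have Ic': "continuous_on {t - T..t} I" by (rule continuous_on_subset[OF Ic[of t]]) (use tT in auto)
  have cA: "integral {c..t - T} I + integral {t - T..t} I = integral {c..t} I"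
    using tT T0 by (intro Henstock_Kurzweil_Integration.integral_combine integrable_continuous_real[OF Ic]) auto
  have cB: "integral {t - T..t} (\<lambda>s. I t - I s) = T *\<^sub>R I t - integral {t - T..t} I"
  proof -
    have "integral {t - T..t} (\<lambda>s. I t - I s) = integral {t - T..t} (\<lambda>s. I t) - integral {t - T..t} I"
      by (rule Henstock_Kurzweil_Integration.integral_diff[OF integrable_continuous_real[OF continuous_on_const]
            integrable_continuous_real[OF Ic']])
    moreover have "integral {t - T..t} (\<lambda>s. I t) = T *\<^sub>R I t"
      using T0 by (simp add: integral_const_real)
    ultimately show ?thesis by simp
  qed
  have eq: "T *\<^sub>R I t - integral {c..t} I + integral {c..t - T} I = integral {t - T..t} (\<lambda>s. I t - I s)"
    unfolding cB cA[symmetric] by (simp add: algebra_simps)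
  have pt: "norm (I t - I s) \<le> M * T" if s: "s \<in> {t - T..t}" for s
  proof -
    have "integral {c..s} k + integral {s..t} k = integral {c..t} k"
      using s tT by (intro Henstock_Kurzweil_Integration.integral_combine integrable_continuous_real[OF kc]) auto
    then have "I t - I s = integral {s..t} k" by (simp add: I_def algebra_simps)
    moreover have "norm (integral {s..t} k) \<le> M * (t - s)"
      using s tT by (intro integral_bound continuous_on_subset[OF cont] bnd) auto
    moreover have "M \<ge> 0" using bnd[of c] norm_ge_zero order_trans by blast
    then have "M * (t - s) \<le> M * T" using s by (intro mult_left_mono) auto
    ultimately show ?thesis by simp
  qed
  have "norm (integral {t - T..t} (\<lambda>s. I t - I s)) \<le> (M * T) * (t - (t - T))"
    using T0 by (intro integral_bound pt) (auto intro!: continuous_intros Ic')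
  then have "norm (T *\<^sub>R I t - integral {c..t} I + integral {c..t - T} I) \<le> M * T * T"
    unfolding eq by simp
  then show ?thesis unfolding I_def[abs_def] .
qed

context thm2a
begin

lemma c1_pos: "c1 > 0" and c2_pos: "c2 > 0"
  and P1: "\<And>\<xi> t. t \<ge> 0 \<Longrightarrow> Vt \<xi> t + Vx \<xi> t \<bullet> fb \<xi> t \<le> - c1 * (\<delta> (norm \<xi>))\<^sup>2"
  and P2: "\<And>\<xi> t. t \<ge> 0 \<Longrightarrow> norm (Vx \<xi> t) \<le> \<delta> (norm \<xi>)"
  and P3: "\<And>s. s \<ge> 0 \<Longrightarrow> \<delta> s \<le> c2 * s"
  using V_wit unfolding compat_witness_def by auto

lemma g_bound: "norm (g \<xi> l) \<le> 2 * \<delta> (norm \<xi> / 2)"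
proof -
  have "norm (g \<xi> l) \<le> norm (f \<xi> l (\<alpha> * l)) + norm (fb \<xi> l)"
    unfolding g_def by (rule norm_triangle_ineq4)
  then show ?thesis using f_bound[OF \<alpha>_pos, of \<xi> l] fb_bound_all[of \<xi> l] by simp
qed

lemma Dg_bound: "norm (Dg \<xi> l) \<le> 2 * K"
proof -
  have "norm (Dg \<xi> l) \<le> norm (Df \<xi> l (\<alpha> * l)) + norm (Dfb \<xi> l)"
    unfolding Dg_def by (rule norm_triangle_ineq4)
  then show ?thesis using Df_bound[OF \<alpha>_pos, of \<xi> l] Dfb_bound[of \<xi> l] by simp
qed

lemma w_bound: "t \<ge> 0 \<Longrightarrow> norm (w \<xi> t) \<le> 4 * \<delta> (norm \<xi> / 2) / a"
proof -
  assume t: "t \<ge> 0"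
  have gc: "continuous_on {c0..} (g \<xi>)" by (rule g_cont1)
  have "norm (T *\<^sub>R G \<xi> t - H \<xi> t + H \<xi> (t - T)) \<le> (2 * \<delta> (norm \<xi> / 2)) * T * T"
    unfolding G_def H_def
    by (rule double_int_bound[OF gc g_bound]) (use t c0T T_pos in auto)
  then have "norm (w \<xi> t) \<le> (a / 2) * ((2 * \<delta> (norm \<xi> / 2)) * T * T)"
    unfolding w_def using a_pos by (simp add: mult_left_mono)
  also have "\<dots> = 4 * \<delta> (norm \<xi> / 2) / a"
    using a_pos by (simp add: T_def field_simps power2_eq_square)
  finally show ?thesis .
qed

lemma Dw_bound: "t \<ge> 0 \<Longrightarrow> norm (Dw \<xi> t) \<le> 4 * K / a"
proof -
  assume t: "t \<ge> 0"
  have gc: "continuous_on {c0..} (Dg \<xi>)"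
  proof -
    have "continuous_on UNIV (\<lambda>l. (\<xi>, l))" by (intro continuous_intros)
    then have "continuous_on UNIV (Dg \<xi>)"
      using continuous_on_compose2[OF Dg_cont, of UNIV "\<lambda>l. (\<xi>, l)"] by simp
    then show ?thesis by (rule continuous_on_subset) auto
  qed
  have "norm (T *\<^sub>R B \<xi> t - BH \<xi> t + BH \<xi> (t - T)) \<le> (2 * K) * T * T"
    unfolding B_def BH_def
    by (rule double_int_bound[OF gc Dg_bound]) (use t c0T T_pos in auto)
  then have "norm (Dw \<xi> t) \<le> (a / 2) * ((2 * K) * T * T)"
    unfolding Dw_def using a_pos by (simp add: mult_left_mono)
  also have "\<dots> = 4 * K / a"
    using a_pos by (simp add: T_def field_simps power2_eq_square)
  finally show ?thesis .
qed

lemma G_avg: "t \<ge> 0 \<Longrightarrow> norm (G \<xi> t - G \<xi> (t - T)) \<le> \<delta> (norm \<xi> / 2) * N a"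
proof -
  assume t: "t \<ge> 0"
  have "integral {c0..t - T} (g \<xi>) + integral {t - T..t} (g \<xi>) = integral {c0..t} (g \<xi>)"
    using t c0T T_pos by (intro Henstock_Kurzweil_Integration.integral_combine integrable_continuous_real[OF g_cont1]) auto
  then have eq: "G \<xi> t - G \<xi> (t - T) = integral {t - T..t} (g \<xi>)" by (simp add: G_def algebra_simps)
  have e1: "(t - 1 / a) - 1 / a = t - T" "(t - 1 / a) + 1 / a = t" by (auto simp: T_def)
  have e2: "(\<lambda>l. f \<xi> l (a\<^sup>2 * l) - fb \<xi> l) = g \<xi>"
    using \<alpha>_pos by (auto simp: g_def a_def)
  have "a \<ge> \<eta>o" using big1 by (simp add: a_def)
  from avg[OF this, where x=\<xi> and r="t - 1 / a"] show ?thesis unfolding eq e1 e2 .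
qed

lemma wt_eq: "wt \<xi> t = g \<xi> t - (a / 2) *\<^sub>R (G \<xi> t - G \<xi> (t - T))"
  using aT by (simp add: wt_def algebra_simps)

end


context thm2a
begin

lemma z_bounds:
  assumes t: "t \<ge> 0"
  shows "norm \<xi> / 2 \<le> norm (z \<xi> t)" "norm (z \<xi> t) \<le> 3 / 2 * norm \<xi>"
proof -
  define D where "D = \<delta> (norm \<xi> / 2)"
  have D: "D \<le> c2 * (norm \<xi> / 2)" unfolding D_def by (rule P3) simp
  have nw: "norm (w \<xi> t) \<le> 4 * D / a" using w_bound[OF t] by (simp add: D_def)
  have "4 * D / a \<le> (2 * c2 * norm \<xi>) / a"
    using D a_pos by (intro divide_right_mono) auto
  also have "\<dots> \<le> norm \<xi> / 2"
  proof -
    have "4 * c2 * norm \<xi> \<le> a * norm \<xi>"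
      using big2 by (intro mult_right_mono) (auto simp: a_def)
    then show ?thesis using a_pos by (simp add: field_simps)
  qed
  finally have w2: "norm (w \<xi> t) \<le> norm \<xi> / 2" using nw by linarith
  have "norm \<xi> - norm (w \<xi> t) \<le> norm (z \<xi> t)"
    unfolding z_def by (rule norm_triangle_ineq2)
  then show "norm \<xi> / 2 \<le> norm (z \<xi> t)" using w2 by linarith
  have "norm (z \<xi> t) \<le> norm \<xi> + norm (w \<xi> t)"
    unfolding z_def by (rule norm_triangle_ineq4)
  then show "norm (z \<xi> t) \<le> 3 / 2 * norm \<xi>" using w2 by linarith
qed

lemma main_ineq:
  assumes t: "t \<ge> 0"
  shows "Wt \<xi> t + Wx \<xi> t \<bullet> (f \<xi> t (\<alpha> * t) + u)
     \<le> - (c1 / 2) * (\<delta> (norm (z \<xi> t)))\<^sup>2 + 2 * \<delta> (norm (z \<xi> t)) * norm u"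
proof -
  define zz where "zz = z \<xi> t"
  define dz where "dz = \<delta> (norm zz)"
  define D where "D = \<delta> (norm \<xi> / 2)"
  define F0 where "F0 = f \<xi> t (\<alpha> * t)"
  define L where "L = Dw \<xi> t"
  define e1 where "e1 = (a / 2) *\<^sub>R (G \<xi> t - G \<xi> (t - T))"
  have dz0: "dz \<ge> 0" unfolding dz_def by (rule \<delta>_nonneg) simp
  have D0: "D \<ge> 0" unfolding D_def by (rule \<delta>_nonneg) simp
  have Ddz: "D \<le> dz" unfolding D_def dz_def zz_def
    by (rule \<delta>_mono) (use z_bounds[OF t] in auto)
  have Vxz: "norm (Vx zz t) \<le> dz" unfolding dz_def by (rule P2[OF t])
  have CS: "Vx zz t \<bullet> v \<le> dz * norm v" for v
  proof -
    have "Vx zz t \<bullet> v \<le> norm (Vx zz t) * norm v"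
      by (metis abs_le_D1 Cauchy_Schwarz_ineq2)
    also have "\<dots> \<le> dz * norm v" using Vxz by (intro mult_right_mono) auto
    finally show ?thesis .
  qed
  have CS': "- (Vx zz t \<bullet> v) \<le> dz * norm v" for v
    using CS[of "- v"] by simp
  have K0: "K \<ge> 0" using K_gt by simp
  have nL: "norm L \<le> 4 * K / a" unfolding L_def by (rule Dw_bound[OF t])
  have KA: "4 * K / a \<le> 1" using big3 a_pos by (simp add: a_def field_simps)
  have b2: "norm (fb \<xi> t - fb zz t) \<le> K * (4 * D / a)"
  proof -
    have "norm (fb \<xi> t - fb zz t) \<le> K * norm (\<xi> - zz)" by (rule fb_lip)
    also have "\<xi> - zz = w \<xi> t" by (simp add: zz_def z_def)
    also have "K * norm (w \<xi> t) \<le> K * (4 * D / a)"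
      using w_bound[OF t] K0 by (intro mult_left_mono) (auto simp: D_def)
    finally show ?thesis .
  qed
  have b3: "norm e1 \<le> (a / 2) * (D * \<bar>N a\<bar>)"
  proof -
    have "norm e1 = (a / 2) * norm (G \<xi> t - G \<xi> (t - T))" using a_pos by (simp add: e1_def)
    also have "norm (G \<xi> t - G \<xi> (t - T)) \<le> D * \<bar>N a\<bar>"
      using G_avg[OF t, of \<xi>] D0 by (simp add: D_def) (meson abs_ge_self mult_left_mono order_trans)
    then have "(a / 2) * norm (G \<xi> t - G \<xi> (t - T)) \<le> (a / 2) * (D * \<bar>N a\<bar>)"
      using a_pos by (intro mult_left_mono) auto
    finally show ?thesis .
  qed
  have b4: "norm (blinfun_apply L F0) \<le> (4 * K / a) * D"
  proof -
    have "norm (blinfun_apply L F0) \<le> norm L * norm F0" by (rule norm_blinfun)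
    also have "\<dots> \<le> (4 * K / a) * D"
      using nL f_bound[OF \<alpha>_pos, of \<xi> t] K0 a_pos by (intro mult_mono) (auto simp: F0_def D_def)
    finally show ?thesis .
  qed
  have b5: "norm (u - blinfun_apply L u) \<le> 2 * norm u"
  proof -
    have "norm (u - blinfun_apply L u) \<le> norm u + norm (blinfun_apply L u)" by (rule norm_triangle_ineq4)
    also have "norm (blinfun_apply L u) \<le> norm L * norm u" by (rule norm_blinfun)
    also have "norm L * norm u \<le> 1 * norm u" using nL KA by (intro mult_right_mono) auto
    finally show ?thesis by simp
  qed
  have eq: "Wt \<xi> t + Wx \<xi> t \<bullet> (F0 + u) =
      (Vt zz t + Vx zz t \<bullet> fb zz t) + Vx zz t \<bullet> (fb \<xi> t - fb zz t) + Vx zz t \<bullet> e1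
      - Vx zz t \<bullet> blinfun_apply L F0 + Vx zz t \<bullet> (u - blinfun_apply L u)"
    unfolding Wt_def Wx_inner wt_eq zz_def[symmetric] L_def[symmetric] e1_def[symmetric]
    by (simp add: g_def F0_def blinfun.add_right inner_diff_right inner_add_right algebra_simps)
  have T1: "Vt zz t + Vx zz t \<bullet> fb zz t \<le> - c1 * dz\<^sup>2" unfolding dz_def by (rule P1[OF t])
  have T2: "Vx zz t \<bullet> (fb \<xi> t - fb zz t) \<le> dz * (K * (4 * D / a))"
    using CS[of "fb \<xi> t - fb zz t"] b2 dz0 by (meson mult_left_mono order_trans)
  have T3: "Vx zz t \<bullet> e1 \<le> dz * ((a / 2) * (D * \<bar>N a\<bar>))"
    using CS[of e1] b3 dz0 by (meson mult_left_mono order_trans)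
  have T4: "- (Vx zz t \<bullet> blinfun_apply L F0) \<le> dz * ((4 * K / a) * D)"
    using CS'[of "blinfun_apply L F0"] b4 dz0 by (meson mult_left_mono order_trans)
  have T5: "Vx zz t \<bullet> (u - blinfun_apply L u) \<le> dz * (2 * norm u)"
    using CS[of "u - blinfun_apply L u"] b5 dz0 by (meson mult_left_mono order_trans)
  have X: "K * (4 * D / a) + (a / 2) * (D * \<bar>N a\<bar>) + (4 * K / a) * D = D * (8 * K / a + a * \<bar>N a\<bar> / 2)"
    by (simp add: field_simps)
  have Xle: "8 * K / a + a * \<bar>N a\<bar> / 2 \<le> c1 / 2"
    using big4 big5 by (simp add: a_def)
  have X0: "8 * K / a + a * \<bar>N a\<bar> / 2 \<ge> 0" using K0 a_pos by simp
  have "D * (8 * K / a + a * \<bar>N a\<bar> / 2) \<le> dz * (c1 / 2)"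
    using Ddz Xle D0 X0 by (intro mult_mono) auto
  then have sum: "dz * (K * (4 * D / a)) + dz * ((a / 2) * (D * \<bar>N a\<bar>)) + dz * ((4 * K / a) * D)
      \<le> dz * (dz * (c1 / 2))"
    using dz0 X by (metis distrib_left mult_left_mono)
  have "Wt \<xi> t + Wx \<xi> t \<bullet> (F0 + u) \<le> - c1 * dz\<^sup>2 + dz * (dz * (c1 / 2)) + dz * (2 * norm u)"
    unfolding eq using T1 T2 T3 T4 T5 sum by linarith
  also have "\<dots> = - (c1 / 2) * dz\<^sup>2 + 2 * dz * norm u"
    by (simp add: power2_eq_square algebra_simps)
  finally show ?thesis by (simp add: F0_def dz_def zz_def)
qed

end


lemma classK_nonneg: "classK d \<Longrightarrow> s \<ge> 0 \<Longrightarrow> d s \<ge> 0"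
  unfolding classK_def pos_def_fun_def by (metis less_eq_real_def)

lemma classK_mono: "classK d \<Longrightarrow> 0 \<le> s \<Longrightarrow> s \<le> s' \<Longrightarrow> d s \<le> d s'"
  unfolding classK_def strict_mono_on_def by (metis atLeast_iff less_eq_real_def order_trans)

lemma classK_scale:
  assumes d: "classK d" and r: "r > 0"
  shows "classK (\<lambda>s. d (r * s))"
proof -
  have c: "continuous_on {0..} d" and d0: "d 0 = 0" and dp: "\<And>s. s > 0 \<Longrightarrow> d s > 0"
    and sm: "strict_mono_on {0..} d"
    using d unfolding classK_def pos_def_fun_def by auto
  have "continuous_on {0..} (\<lambda>s. r * s)" by (intro continuous_intros)
  moreover have "(\<lambda>s. r * s) ` {0..} \<subseteq> {0..}" using r by auto
  ultimately have "continuous_on {0..} (\<lambda>s. d (r * s))"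
    using continuous_on_compose2[OF c, of "{0..}" "\<lambda>s. r * s"] by simp
  moreover have "strict_mono_on {0..} (\<lambda>s. d (r * s))"
    using sm r unfolding strict_mono_on_def by simp
  ultimately show ?thesis
    unfolding classK_def pos_def_fun_def using d0 dp r by simp
qed

lemma classKinf_scale:
  assumes d: "classKinf d" and r: "r > 0"
  shows "classKinf (\<lambda>s. d (r * s))"
proof -
  have "\<exists>s\<ge>0. M < d (r * s)" for M
  proof -
    obtain s where "s \<ge> 0" "M < d s" using d unfolding classKinf_def by blast
    then show ?thesis using r by (intro exI[of _ "s / r"]) auto
  qed
  then show ?thesis using classK_scale[OF _ r] d unfolding classKinf_def by blast
qed

lemma classK_sq:
  assumes d: "classK d"
  shows "classK (\<lambda>s. (d s)\<^sup>2)"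
proof -
  have c: "continuous_on {0..} d" and d0: "d 0 = 0" and dp: "\<And>s. s > 0 \<Longrightarrow> d s > 0"
    and sm: "strict_mono_on {0..} d"
    using d unfolding classK_def pos_def_fun_def by auto
  have "strict_mono_on {0..} (\<lambda>s. (d s)\<^sup>2)"
    unfolding strict_mono_on_def
  proof (intro allI impI)
    fix s t :: real assume "s \<in> {0..} \<and> t \<in> {0..} \<and> s < t"
    then have st: "s \<in> {0..}" "t \<in> {0..}" "s < t" by auto
    then have "d s < d t" using sm unfolding strict_mono_on_def by blast
    moreover have "d s \<ge> 0" using classK_nonneg[OF d] st by simp
    ultimately show "(d s)\<^sup>2 < (d t)\<^sup>2" by (intro power_strict_mono) auto
  qed
  then show ?thesis
    unfolding classK_def pos_def_fun_def using c d0 dp by (auto intro!: continuous_intros) (metis less_irrefl)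
qed

lemma classKinf_sq:
  assumes d: "classKinf d"
  shows "classKinf (\<lambda>s. (d s)\<^sup>2)"
proof -
  have "\<exists>s\<ge>0. M < (d s)\<^sup>2" for M
  proof -
    obtain s where s: "s \<ge> 0" "max M 1 < d s" using d unfolding classKinf_def by blast
    then have "d s \<le> (d s)\<^sup>2" by (simp add: power2_eq_square)
    then show ?thesis using s by (intro exI[of _ s]) auto
  qed
  then show ?thesis using classK_sq d unfolding classKinf_def by blast
qed

lemma classK_cmul:
  assumes d: "classK d" and k: "k > 0"
  shows "classK (\<lambda>s. k * d s)"
proof -
  have c: "continuous_on {0..} d" and d0: "d 0 = 0" and dp: "\<And>s. s > 0 \<Longrightarrow> d s > 0"
    and sm: "strict_mono_on {0..} d"
    using d unfolding classK_def pos_def_fun_def by auto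
  have "strict_mono_on {0..} (\<lambda>s. k * d s)"
    using sm k unfolding strict_mono_on_def by simp
  then show ?thesis
    unfolding classK_def pos_def_fun_def using c d0 dp k by (auto intro!: continuous_intros)
qed

lemma classKinf_cmul:
  assumes d: "classKinf d" and k: "k > 0"
  shows "classKinf (\<lambda>s. k * d s)"
proof -
  have "\<exists>s\<ge>0. M < k * d s" for M
  proof -
    obtain s where s: "s \<ge> 0" "M / k < d s" using d unfolding classKinf_def by blast
    then show ?thesis using k by (intro exI[of _ s]) (auto simp: field_simps)
  qed
  then show ?thesis using classK_cmul[OF _ k] d unfolding classKinf_def by blast
qed

lemma classKinf_id: "classKinf (\<lambda>s::real. s)"
proof -
  have "\<exists>s\<ge>0. M < s" for M :: real by (intro exI[of _ "\<bar>M\<bar> + 1"]) auto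
  moreover have "classK (\<lambda>s::real. s)"
    unfolding classK_def pos_def_fun_def strict_mono_on_def by (auto intro!: continuous_intros)
  ultimately show ?thesis unfolding classKinf_def by blast
qed

lemma classK_d3:
  assumes "classK d" "k > 0"
  shows "classK (\<lambda>s. k * (d (s / 2))\<^sup>2)"
  using classK_cmul[OF classK_sq[OF classK_scale[OF assms(1), of "1/2"]] assms(2)] by simp

lemma classKinf_d3:
  assumes "classKinf d" "k > 0"
  shows "classKinf (\<lambda>s. k * (d (s / 2))\<^sup>2)"
  using classKinf_cmul[OF classKinf_sq[OF classKinf_scale[OF assms(1), of "1/2"]] assms(2)] by simp

lemma classKinf_chi:
  assumes "classKinf d" "k > 0"
  shows "classKinf (\<lambda>s. k * d (s / 2))"
  using classKinf_cmul[OF classKinf_scale[OF assms(1), of "1/2"] assms(2)] by simp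

lemma classKinf_quad:
  assumes "k > 0"
  shows "classKinf (\<lambda>r::real. k * r\<^sup>2)"
  using classKinf_cmul[OF classKinf_sq[OF classKinf_id] assms] by simp

context thm2a
begin

lemma pointwise:
  assumes t: "t \<ge> 0"
  shows "\<exists>dz. 0 \<le> \<delta> (norm \<xi> / 2) \<and> \<delta> (norm \<xi> / 2) \<le> dz \<and>
     (\<forall>u. Wt \<xi> t + Wx \<xi> t \<bullet> (f \<xi> t (\<alpha> * t) + u) \<le> - (c1 / 2) * dz\<^sup>2 + 2 * dz * norm u)"
proof (intro exI conjI allI)
  show "0 \<le> \<delta> (norm \<xi> / 2)" by (rule \<delta>_nonneg) simp
  show "\<delta> (norm \<xi> / 2) \<le> \<delta> (norm (z \<xi> t))"
    by (rule \<delta>_mono) (use z_bounds[OF t] in auto)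
  fix u show "Wt \<xi> t + Wx \<xi> t \<bullet> (f \<xi> t (\<alpha> * t) + u) \<le> - (c1 / 2) * (\<delta> (norm (z \<xi> t)))\<^sup>2 + 2 * \<delta> (norm (z \<xi> t)) * norm u"
    by (rule main_ineq[OF t])
qed

lemma Vbounds:
  assumes d1: "classKinf d1" and d2: "classKinf d2"
    and Vb: "\<And>\<xi> t. t \<ge> 0 \<Longrightarrow> d1 (norm \<xi>) \<le> V \<xi> t \<and> V \<xi> t \<le> d2 (norm \<xi>)"
    and t: "t \<ge> 0"
  shows "d1 (norm \<xi> / 2) \<le> V_alpha V f fb \<alpha> \<xi> t \<and> V_alpha V f fb \<alpha> \<xi> t \<le> d2 (3 / 2 * norm \<xi>)"
proof -
  have k1: "classK d1" and k2: "classK d2" using d1 d2 unfolding classKinf_def by auto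
  have "d1 (norm \<xi> / 2) \<le> d1 (norm (z \<xi> t))"
    by (rule classK_mono[OF k1]) (use z_bounds[OF t] in auto)
  moreover have "d2 (norm (z \<xi> t)) \<le> d2 (3 / 2 * norm \<xi>)"
    by (rule classK_mono[OF k2]) (use z_bounds[OF t] in auto)
  ultimately show ?thesis using Vb[OF t, of "z \<xi> t"] Valpha_eq[OF t] by auto
qed

end

theorem theorem2:
  fixes f :: "'a::euclidean_space \<Rightarrow> real \<Rightarrow> real \<Rightarrow> 'a"
    and fb :: "'a \<Rightarrow> real \<Rightarrow> 'a"
    and Df :: "'a \<Rightarrow> real \<Rightarrow> real \<Rightarrow> 'a \<Rightarrow>\<^sub>L 'a"
    and Dfb :: "'a \<Rightarrow> real \<Rightarrow> 'a \<Rightarrow>\<^sub>L 'a"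
    and \<rho> \<delta> N :: "real \<Rightarrow> real"
    and \<eta>o K c1 c2 :: real
    and V Vt :: "'a \<Rightarrow> real \<Rightarrow> real"
    and Vx :: "'a \<Rightarrow> real \<Rightarrow> 'a"
  \<comment> \<open>standing assumptions\<close>
  assumes f_cont_t: "\<And>x. continuous_on UNIV (\<lambda>p. f x (fst p) (snd p))"
    and f_deriv: "\<And>x t \<tau>. ((\<lambda>y. f y t \<tau>) has_derivative blinfun_apply (Df x t \<tau>)) (at x)"
    and Df_cont: "continuous_on UNIV (\<lambda>p. Df (fst p) (fst (snd p)) (snd (snd p)))"
    and fb_cont_t: "\<And>x. continuous_on UNIV (fb x)"
    and fb_deriv: "\<And>x t. ((\<lambda>y. fb y t) has_derivative blinfun_apply (Dfb x t)) (at x)"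
    and Dfb_cont: "continuous_on UNIV (\<lambda>p. Dfb (fst p) (snd p))"
    and f_zero: "\<And>t \<alpha>. \<alpha> > 0 \<Longrightarrow> f 0 t (\<alpha> * t) = 0"
    and fb_zero: "\<And>t. fb 0 t = 0"
    and fc_bar: "forward_complete fb"
    and fc_alpha: "\<And>\<alpha>. \<alpha> > 0 \<Longrightarrow> forward_complete (\<lambda>x t. f x t (\<alpha> * t))"
    and fc_input: "\<And>\<alpha> u. \<alpha> > 0 \<Longrightarrow> continuous_on UNIV u \<Longrightarrow>
                     forward_complete (\<lambda>x t. f x t (\<alpha> * t) + u t)"
    and \<rho>_Kinf: "classKinf \<rho>"
    and f_rho: "\<And>x t \<alpha>. \<alpha> > 0 \<Longrightarrow> norm (f x t (\<alpha> * t)) \<le> \<rho> (norm x)"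
  \<comment> \<open>hypotheses of the theorem\<close>
    and \<delta>_K: "classK \<delta>"
    and ugas: "UGAS fb"
    and compat: "delta_compatible fb \<delta>"
    and \<eta>o_pos: "\<eta>o > 0" and K_gt: "K > 1" and N_M: "classM N"
    and avg: "\<And>\<eta> x r. \<eta> \<ge> \<eta>o \<Longrightarrow>
       norm (integral {r - 1/\<eta> .. r + 1/\<eta>} (\<lambda>l. f x l (\<eta>\<^sup>2 * l) - fb x l)) \<le> \<delta> (norm x / 2) * N \<eta>"
    and Dfb_bound: "\<And>x t. norm (Dfb x t) \<le> K"
    and Df_bound: "\<And>x t \<alpha>. \<alpha> > 0 \<Longrightarrow> norm (Df x t (\<alpha> * t)) \<le> K"
    and f_bound: "\<And>x t \<alpha>. \<alpha> > 0 \<Longrightarrow> norm (f x t (\<alpha> * t)) \<le> \<delta> (norm x / 2)"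
    and V_wit: "compat_witness fb \<delta> V Vx Vt c1 c2"
  shows "\<exists>\<alpha>l>0.
     (\<forall>\<alpha>>\<alpha>l. lyapunov_fun (\<lambda>\<xi> t. f \<xi> t (\<alpha> * t)) (V_alpha V f fb \<alpha>)
              \<and> iISS_lyapunov_fun (\<lambda>\<xi> t u. f \<xi> t (\<alpha> * t) + u) (V_alpha V f fb \<alpha>))
     \<and> (classKinf \<delta> \<longrightarrow>
          (\<forall>\<alpha>>\<alpha>l. ISS_lyapunov_fun (\<lambda>\<xi> t u. f \<xi> t (\<alpha> * t) + u) (V_alpha V f fb \<alpha>)))"
proof -
  have th2: "thm2 f fb Df Dfb \<delta> N \<eta>o K c1 c2 V Vt Vx"
    by (rule thm2.intro[OF f_cont_t f_deriv Df_cont fb_cont_t fb_deriv Dfb_cont \<delta>_K \<eta>o_pos K_gt N_M avg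
      Dfb_bound Df_bound f_bound V_wit])
  interpret thm2 f fb Df Dfb \<delta> N \<eta>o K c1 c2 V Vt Vx by (rule th2)
  have c1p: "c1 > 0" using V_wit by (simp add: compat_witness_def)
  have lw: "lyap_with fb V Vx Vt" using V_wit by (simp add: compat_witness_def)
  then have "\<exists>d1 d2 d3. classKinf d1 \<and> classKinf d2 \<and> classK d3 \<and>
       (\<forall>\<xi> t. t \<ge> 0 \<longrightarrow> d1 (norm \<xi>) \<le> V \<xi> t \<and> V \<xi> t \<le> d2 (norm \<xi>)
          \<and> Vt \<xi> t + Vx \<xi> t \<bullet> fb \<xi> t \<le> - d3 (norm \<xi>))"
    unfolding lyap_with_def by (rule conjunct2)
  then obtain d1 d2 d3 where dd: "classKinf d1 \<and> classKinf d2 \<and> classK d3 \<and>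
       (\<forall>\<xi> t. t \<ge> 0 \<longrightarrow> d1 (norm \<xi>) \<le> V \<xi> t \<and> V \<xi> t \<le> d2 (norm \<xi>)
          \<and> Vt \<xi> t + Vx \<xi> t \<bullet> fb \<xi> t \<le> - d3 (norm \<xi>))" by blast
  have d1: "classKinf d1" and d2: "classKinf d2" using dd by simp_all
  have Vb: "\<And>\<xi> t. t \<ge> 0 \<Longrightarrow> d1 (norm \<xi>) \<le> V \<xi> t \<and> V \<xi> t \<le> d2 (norm \<xi>)"
    using dd by simp
  have d1': "classKinf (\<lambda>s. d1 (s / 2))" using classKinf_scale[OF d1, of "1/2"] by simp
  have d2': "classKinf (\<lambda>s. d2 (3 / 2 * s))" using classKinf_scale[OF d2, of "3/2"] by simp
  have "((\<lambda>\<eta>. \<eta> * N \<eta>) \<longlongrightarrow> 0) at_top" using N_M unfolding classM_def .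
  then have "eventually (\<lambda>\<eta>. dist (\<eta> * N \<eta>) 0 < c1 / 2) at_top" using c1p by (intro tendstoD) auto
  then obtain E where E: "\<And>\<eta>. \<eta> \<ge> E \<Longrightarrow> \<bar>\<eta> * N \<eta>\<bar> < c1 / 2"
    unfolding eventually_at_top_linorder by auto
  define a0 where "a0 = max (max \<eta>o (4 * c2)) (max (4 * K) (max (32 * K / c1) (max E 1)))"
  have a01: "a0 \<ge> 1" by (simp add: a0_def)
  define \<alpha>l where "\<alpha>l = a0\<^sup>2"
  have \<alpha>l_pos: "\<alpha>l > 0" using a01 by (simp add: \<alpha>l_def)
  have big: "thm2a f fb Df Dfb \<delta> N \<eta>o K c1 c2 V Vt Vx \<alpha>" if \<alpha>: "\<alpha> > \<alpha>l" for \<alpha>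
  proof -
    have \<alpha>0: "\<alpha> > 0" using \<alpha> \<alpha>l_pos by simp
    have sa: "sqrt \<alpha> > a0" using \<alpha> unfolding \<alpha>l_def by (intro real_less_rsqrt) simp
    have s1: "sqrt \<alpha> \<ge> \<eta>o" "sqrt \<alpha> \<ge> 4 * c2" "sqrt \<alpha> \<ge> 4 * K" "sqrt \<alpha> \<ge> 32 * K / c1" "sqrt \<alpha> \<ge> E"
      using sa by (auto simp: a0_def)
    have sp: "sqrt \<alpha> > 0" using \<alpha>0 by simp
    have b4: "8 * K / sqrt \<alpha> \<le> c1 / 4"
    proof -
      have "32 * K \<le> c1 * sqrt \<alpha>" using s1(4) c1p by (simp add: field_simps)
      then show ?thesis using sp by (simp add: field_simps)
    qed
    have b5: "sqrt \<alpha> * \<bar>N (sqrt \<alpha>)\<bar> \<le> c1 / 2"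
      using E[OF s1(5)] sp by (simp add: abs_mult)
    have ax: "thm2a_axioms N \<eta>o K c1 c2 \<alpha>"
      using \<alpha>0 s1 b4 b5 by (intro thm2a_axioms.intro) assumption+
    show ?thesis
      by (rule thm2a.intro[OF th2 ax])
  qed
  have L: "lyapunov_fun (\<lambda>\<xi> t. f \<xi> t (\<alpha> * t)) (V_alpha V f fb \<alpha>)
              \<and> iISS_lyapunov_fun (\<lambda>\<xi> t u. f \<xi> t (\<alpha> * t) + u) (V_alpha V f fb \<alpha>)"
    and I: "classKinf \<delta> \<Longrightarrow> ISS_lyapunov_fun (\<lambda>\<xi> t u. f \<xi> t (\<alpha> * t) + u) (V_alpha V f fb \<alpha>)"
    if \<alpha>: "\<alpha> > \<alpha>l" for \<alpha>
  proof -
    interpret A: thm2a f fb Df Dfb \<delta> N \<eta>o K c1 c2 V Vt Vx \<alpha> by (rule big[OF \<alpha>])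
    have C1: "C1_tv (V_alpha V f fb \<alpha>) A.Wx A.Wt" by (rule A.Walpha_C1)
    have VB: "\<And>\<xi> t. t \<ge> 0 \<Longrightarrow> d1 (norm \<xi> / 2) \<le> V_alpha V f fb \<alpha> \<xi> t \<and> V_alpha V f fb \<alpha> \<xi> t \<le> d2 (3 / 2 * norm \<xi>)"
      by (rule A.Vbounds[OF d1 d2 Vb])
    have upd: "unif_proper_pd (V_alpha V f fb \<alpha>)"
      unfolding unif_proper_pd_def
    proof (intro exI conjI allI impI)
      show "classKinf (\<lambda>s. d1 (s / 2))" by (rule d1')
      show "classKinf (\<lambda>s. d2 (3 / 2 * s))" by (rule d2')
      fix \<xi> and t :: real assume "0 \<le> t"
      from VB[OF this, of \<xi>] show "d1 (norm \<xi> / 2) \<le> V_alpha V f fb \<alpha> \<xi> t" "V_alpha V f fb \<alpha> \<xi> t \<le> d2 (3 / 2 * norm \<xi>)"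
        by auto
    qed
    have lyap: "lyapunov_fun (\<lambda>\<xi> t. f \<xi> t (\<alpha> * t)) (V_alpha V f fb \<alpha>)"
      unfolding lyapunov_fun_def lyap_with_def
    proof (intro exI conjI)
      show "C1_tv (V_alpha V f fb \<alpha>) A.Wx A.Wt" by (rule C1)
      show "classKinf (\<lambda>s. d1 (s / 2))" by (rule d1')
      show "classKinf (\<lambda>s. d2 (3 / 2 * s))" by (rule d2')
      show "classK (\<lambda>s. (c1 / 2) * (\<delta> (s / 2))\<^sup>2)" by (rule classK_d3[OF \<delta>_K]) (use c1p in simp)
      show "\<forall>\<xi> t. 0 \<le> t \<longrightarrow> d1 (norm \<xi> / 2) \<le> V_alpha V f fb \<alpha> \<xi> t \<and> V_alpha V f fb \<alpha> \<xi> t \<le> d2 (3 / 2 * norm \<xi>) \<and>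
          A.Wt \<xi> t + A.Wx \<xi> t \<bullet> f \<xi> t (\<alpha> * t) \<le> - (c1 / 2 * (\<delta> (norm \<xi> / 2))\<^sup>2)"
      proof (intro allI impI conjI)
        fix \<xi> and t :: real assume t: "0 \<le> t"
        show "d1 (norm \<xi> / 2) \<le> V_alpha V f fb \<alpha> \<xi> t" "V_alpha V f fb \<alpha> \<xi> t \<le> d2 (3 / 2 * norm \<xi>)"
          using VB[OF t] by auto
        obtain dz where dz: "0 \<le> \<delta> (norm \<xi> / 2)" "\<delta> (norm \<xi> / 2) \<le> dz"
          "\<And>u. A.Wt \<xi> t + A.Wx \<xi> t \<bullet> (f \<xi> t (\<alpha> * t) + u) \<le> - (c1 / 2) * dz\<^sup>2 + 2 * dz * norm u"
          using A.pointwise[OF t, of \<xi>] by blast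
        have "(\<delta> (norm \<xi> / 2))\<^sup>2 \<le> dz\<^sup>2" by (rule power_mono[OF dz(2) dz(1)])
        then have "c1 / 2 * (\<delta> (norm \<xi> / 2))\<^sup>2 \<le> c1 / 2 * dz\<^sup>2" using c1p by simp
        moreover have "A.Wt \<xi> t + A.Wx \<xi> t \<bullet> f \<xi> t (\<alpha> * t) \<le> - (c1 / 2) * dz\<^sup>2"
          using dz(3)[of 0] by simp
        ultimately show "A.Wt \<xi> t + A.Wx \<xi> t \<bullet> f \<xi> t (\<alpha> * t) \<le> - (c1 / 2 * (\<delta> (norm \<xi> / 2))\<^sup>2)"
          by linarith
      qed
    qed
    have iiss: "iISS_lyapunov_fun (\<lambda>\<xi> t u. f \<xi> t (\<alpha> * t) + u) (V_alpha V f fb \<alpha>)"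
      unfolding iISS_lyapunov_fun_def
    proof (intro exI conjI)
      show "C1_tv (V_alpha V f fb \<alpha>) A.Wx A.Wt" by (rule C1)
      show "unif_proper_pd (V_alpha V f fb \<alpha>)" by (rule upd)
      show "classKinf (\<lambda>r. (4 / c1) * r\<^sup>2)" by (rule classKinf_quad) (use c1p in simp)
      show "pos_def_fun (\<lambda>s. (c1 / 4) * (\<delta> (s / 2))\<^sup>2)"
        using classK_d3[OF \<delta>_K, of "c1 / 4"] c1p unfolding classK_def by simp
      show "\<forall>t \<xi> u. 0 \<le> t \<longrightarrow> A.Wt \<xi> t + A.Wx \<xi> t \<bullet> (f \<xi> t (\<alpha> * t) + u)
           \<le> - (c1 / 4 * (\<delta> (norm \<xi> / 2))\<^sup>2) + 4 / c1 * (norm u)\<^sup>2"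
      proof (intro allI impI)
        fix \<xi> u :: 'a and t :: real assume t: "0 \<le> t"
        obtain dz where dz: "0 \<le> \<delta> (norm \<xi> / 2)" "\<delta> (norm \<xi> / 2) \<le> dz"
          "\<And>u. A.Wt \<xi> t + A.Wx \<xi> t \<bullet> (f \<xi> t (\<alpha> * t) + u) \<le> - (c1 / 2) * dz\<^sup>2 + 2 * dz * norm u"
          using A.pointwise[OF t, of \<xi>] by blast
        have sq: "(\<delta> (norm \<xi> / 2))\<^sup>2 \<le> dz\<^sup>2" by (rule power_mono[OF dz(2) dz(1)])
        have key: "(c1 / 4) * (dz - (4 / c1) * norm u)\<^sup>2 = (c1 / 4) * dz\<^sup>2 - 2 * dz * norm u + (4 / c1) * (norm u)\<^sup>2"
          using c1p by (simp add: field_simps power2_eq_square)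
        have "0 \<le> (c1 / 4) * (dz - (4 / c1) * norm u)\<^sup>2" using c1p by simp
        moreover have "(c1 / 4) * (\<delta> (norm \<xi> / 2))\<^sup>2 \<le> (c1 / 4) * dz\<^sup>2" using sq c1p by simp
        ultimately show "A.Wt \<xi> t + A.Wx \<xi> t \<bullet> (f \<xi> t (\<alpha> * t) + u)
           \<le> - (c1 / 4 * (\<delta> (norm \<xi> / 2))\<^sup>2) + 4 / c1 * (norm u)\<^sup>2"
          using dz(3)[of u] key by linarith
      qed
    qed
    show "lyapunov_fun (\<lambda>\<xi> t. f \<xi> t (\<alpha> * t)) (V_alpha V f fb \<alpha>)
              \<and> iISS_lyapunov_fun (\<lambda>\<xi> t u. f \<xi> t (\<alpha> * t) + u) (V_alpha V f fb \<alpha>)"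
      using lyap iiss by blast
    assume dK: "classKinf \<delta>"
    show "ISS_lyapunov_fun (\<lambda>\<xi> t u. f \<xi> t (\<alpha> * t) + u) (V_alpha V f fb \<alpha>)"
      unfolding ISS_lyapunov_fun_def
    proof (intro exI conjI)
      show "C1_tv (V_alpha V f fb \<alpha>) A.Wx A.Wt" by (rule C1)
      show "unif_proper_pd (V_alpha V f fb \<alpha>)" by (rule upd)
      show "classKinf (\<lambda>s. (c1 / 8) * \<delta> (s / 2))" by (rule classKinf_chi[OF dK]) (use c1p in simp)
      show "classKinf (\<lambda>s. (c1 / 4) * (\<delta> (s / 2))\<^sup>2)" by (rule classKinf_d3[OF dK]) (use c1p in simp)
      show "\<forall>t \<xi> u. 0 \<le> t \<longrightarrow> norm u \<le> c1 / 8 * \<delta> (norm \<xi> / 2) \<longrightarrow>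
          A.Wt \<xi> t + A.Wx \<xi> t \<bullet> (f \<xi> t (\<alpha> * t) + u) \<le> - (c1 / 4 * (\<delta> (norm \<xi> / 2))\<^sup>2)"
      proof (intro allI impI)
        fix \<xi> u :: 'a and t :: real assume t: "0 \<le> t" and u: "norm u \<le> c1 / 8 * \<delta> (norm \<xi> / 2)"
        obtain dz where dz: "0 \<le> \<delta> (norm \<xi> / 2)" "\<delta> (norm \<xi> / 2) \<le> dz"
          "\<And>u. A.Wt \<xi> t + A.Wx \<xi> t \<bullet> (f \<xi> t (\<alpha> * t) + u) \<le> - (c1 / 2) * dz\<^sup>2 + 2 * dz * norm u"
          using A.pointwise[OF t, of \<xi>] by blast
        have sq: "(\<delta> (norm \<xi> / 2))\<^sup>2 \<le> dz\<^sup>2" by (rule power_mono[OF dz(2) dz(1)])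
        have dz0: "dz \<ge> 0" using dz(1,2) by linarith
        have "c1 / 8 * \<delta> (norm \<xi> / 2) \<le> c1 / 8 * dz" using dz(2) c1p by simp
        then have "norm u \<le> c1 / 8 * dz" using u by linarith
        then have "2 * dz * norm u \<le> 2 * dz * (c1 / 8 * dz)" using dz0 by (intro mult_left_mono) auto
        also have "\<dots> = (c1 / 4) * dz\<^sup>2" by (simp add: power2_eq_square)
        finally have "2 * dz * norm u \<le> (c1 / 4) * dz\<^sup>2" .
        moreover have "(c1 / 4) * (\<delta> (norm \<xi> / 2))\<^sup>2 \<le> (c1 / 4) * dz\<^sup>2" using sq c1p by simp
        ultimately show "A.Wt \<xi> t + A.Wx \<xi> t \<bullet> (f \<xi> t (\<alpha> * t) + u) \<le> - (c1 / 4 * (\<delta> (norm \<xi> / 2))\<^sup>2)"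
          using dz(3)[of u] by linarith
      qed
    qed
  qed
  show ?thesis
  proof (intro exI[of _ \<alpha>l] conjI allI impI)
    show "\<alpha>l > 0" by (rule \<alpha>l_pos)
    fix \<alpha> assume "\<alpha>l < \<alpha>"
    from L[OF this] show "lyapunov_fun (\<lambda>\<xi> t. f \<xi> t (\<alpha> * t)) (V_alpha V f fb \<alpha>)"
      "iISS_lyapunov_fun (\<lambda>\<xi> t u. f \<xi> t (\<alpha> * t) + u) (V_alpha V f fb \<alpha>)" by simp_all
  next
    fix \<alpha> assume "classKinf \<delta>" "\<alpha>l < \<alpha>"
    then show "ISS_lyapunov_fun (\<lambda>\<xi> t u. f \<xi> t (\<alpha> * t) + u) (V_alpha V f fb \<alpha>)"
      using I by blast
  qed
qed


end
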